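(* Let $n\geq 2$. Every h-sphere $S^{2n}(z_0;a,b)$ in $(\mathbb{R}^{2n+2},g,J)$ is an h-umbilical holomorphic hypersurface of constant totally real sectional curvatures $$\nu=\frac{a}{a^2+b^2}=g(H,H),\qquad \tilde\nu=\frac{-b}{a^2+b^2}=\tilde g(H,H),$$ where $H$ is its mean curvature vector.
   Context: On $\mathbb{R}^{2n+2}$ with points $Z=(x^1,\dots,x^{n+1};y^1,\dots,y^{n+1})$, let $J(x;y)=(y;-x)$, $g(Z,W)=\sum_k x_Z^kx_W^k-\sum_k y_Z^ky_W^k$, $\tilde g(Z,W)=g(JZ,W)$ (so $\tilde g(Z,Z)=2\sum_kx^ky^k$); this is a flat Kähler manifold with Norden metric. For $z_0$ with position vector $Z_0$ and $(a,b)\in\mathbb{R}^2\setminus\{(0,0)\}$, the h-sphere is $S^{2n}(z_0;a,b)=\{Z: g(Z-Z_0,Z-Z_0)=a,\ \tilde g(Z-Z_0,Z-Z_0)=b\}$. A holomorphic hypersurface is a $2n$-dimensional submanifold $M$ with $J(T_pM)=T_pM$ and $g|_{T_pM}$ nondegenerate; with induced Levi-Civita connection $\nabla$, $\sigma$ is defined by $\nabla'_XY=\nabla_XY+\sigma(X,Y)$, $H=\frac1{2n}\operatorname{trace}_g\sigma$, and $M$ is h-umbilical if $\sigma(x,y)=g(x,y)H-\tilde g(x,y)JH$ everywhere. Curvature: $R(X,Y)Z=\nabla_X\nabla_YZ-\nabla_Y\nabla_XZ-\nabla_{[X,Y]}Z$, $R(x,y,z,u)=g(R(x,y)z,u)$,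 $\tilde R(x,y,z,u)=R(x,y,z,Ju)$, $\pi_1(x,y,z,u)=g(y,z)g(x,u)-g(x,z)g(y,u)$; for a $g$-nondegenerate 2-plane $\beta\subset T_pM$ with basis $x,y$, $K(\beta;p)=R(x,y,y,x)/\pi_1(x,y,y,x)$, $\tilde K(\beta;p)=\tilde R(x,y,y,x)/\pi_1(x,y,y,x)$; $\beta$ is totally real if $\beta\neq J\beta$, $\beta\perp_g J\beta$. Constant totally real sectional curvatures $\nu,\tilde\nu$ means $K(\beta;p)=\nu$, $\tilde K(\beta;p)=\tilde\nu$ for all $p$ and all nondegenerate totally real $\beta$. *)

theory Defs
  imports "HOL-Analysis.Analysis"
begin

type_synonym 'n pt = "(real^'n) \<times> (real^'n)"

definition Jop :: "('n::finite) pt \<Rightarrow> 'n pt" where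
  "Jop Z = (snd Z, - fst Z)"

definition gN :: "('n::finite) pt \<Rightarrow> 'n pt \<Rightarrow> real" where
  "gN Z W = fst Z \<bullet> fst W - snd Z \<bullet> snd W"

definition gT :: "('n::finite) pt \<Rightarrow> 'n pt \<Rightarrow> real" where
  "gT Z W = gN (Jop Z) W"

definition hsphere :: "('n::finite) pt \<Rightarrow> real \<Rightarrow> real \<Rightarrow> 'n pt set" where
  "hsphere Z0 a b = {Z. gN (Z - Z0) (Z - Z0) = a \<and> gT (Z - Z0) (Z - Z0) = b}"

fun Ck_on :: "nat \<Rightarrow> 'a::euclidean_space set \<Rightarrow> ('a \<Rightarrow> 'b::euclidean_space) \<Rightarrow> bool" where
  "Ck_on 0 U f = continuous_on U f"
| "Ck_on (Suc k) U f =
     ((\<forall>x\<in>U. f differentiable (at x)) \<and>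
      (\<forall>v. Ck_on k U (\<lambda>x. frechet_derivative f (at x) v)))"

definition smooth_on :: "'a::euclidean_space set \<Rightarrow> ('a \<Rightarrow> 'b::euclidean_space) \<Rightarrow> bool" where
  "smooth_on U f \<longleftrightarrow> open U \<and> (\<forall>k. Ck_on k U f)"

definition submanifold_codim2 :: "'a::euclidean_space set \<Rightarrow> bool" where
  "submanifold_codim2 M \<longleftrightarrow>
    (\<forall>p\<in>M. \<exists>U (F :: 'a \<Rightarrow> real \<times> real). p \<in> U \<and> smooth_on U F \<and>
        M \<inter> U = {q\<in>U. F q = 0} \<and>
        (\<forall>q\<in>M \<inter> U. surj (frechet_derivative F (at q))))"

definition tangent_space :: "'a::euclidean_space set \<Rightarrow> 'a \<Rightarrow> 'a set" where
  "tangent_space M p = {v. \<exists>\<gamma>::real \<Rightarrow> 'a. \<gamma> 0 = p \<and> (\<forall>t\<in>{-1<..<1}. \<gamma> t \<in> M) \<and>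
        (\<gamma> has_vector_derivative v) (at 0)}"

definition nondeg :: "('n::finite) pt set \<Rightarrow> bool" where
  "nondeg V \<longleftrightarrow> (\<forall>v\<in>V. (\<forall>w\<in>V. gN v w = 0) \<longrightarrow> v = 0)"

definition holomorphic_hypersurface :: "('n::finite) pt set \<Rightarrow> bool" where
  "holomorphic_hypersurface M \<longleftrightarrow> submanifold_codim2 M \<and>
     (\<forall>p\<in>M. Jop ` tangent_space M p = tangent_space M p \<and> nondeg (tangent_space M p))"

definition tan_proj :: "('n::finite) pt set \<Rightarrow> 'n pt \<Rightarrow> 'n pt \<Rightarrow> 'n pt" where
  "tan_proj M p w = (THE u. u \<in> tangent_space M p \<and> (\<forall>v\<in>tangent_space M p. gN (w - u) v = 0))"

definition tangent_field :: "('n::finite) pt set \<Rightarrow> ('n pt \<Rightarrow> 'n pt) \<Rightarrow> bool" where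
  "tangent_field M X \<longleftrightarrow> (\<exists>U. M \<subseteq> U \<and> smooth_on U X) \<and> (\<forall>p\<in>M. X p \<in> tangent_space M p)"

definition dD :: "('n::finite) pt set \<Rightarrow> ('n pt \<Rightarrow> 'n pt) \<Rightarrow> 'n pt \<Rightarrow> 'n pt \<Rightarrow> 'n pt" where
  "dD M f p v = frechet_derivative f (at p within M) v"

definition flatD :: "('n::finite) pt set \<Rightarrow> ('n pt \<Rightarrow> 'n pt) \<Rightarrow> ('n pt \<Rightarrow> 'n pt) \<Rightarrow> 'n pt \<Rightarrow> 'n pt" where
  "flatD M X Y p = dD M Y p (X p)"

definition nabla :: "('n::finite) pt set \<Rightarrow> ('n pt \<Rightarrow> 'n pt) \<Rightarrow> ('n pt \<Rightarrow> 'n pt) \<Rightarrow> 'n pt \<Rightarrow> 'n pt" where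
  "nabla M X Y p = tan_proj M p (flatD M X Y p)"

definition lie :: "('n::finite) pt set \<Rightarrow> ('n pt \<Rightarrow> 'n pt) \<Rightarrow> ('n pt \<Rightarrow> 'n pt) \<Rightarrow> 'n pt \<Rightarrow> 'n pt" where
  "lie M X Y p = flatD M X Y p - flatD M Y X p"

definition curvR :: "('n::finite) pt set \<Rightarrow> ('n pt \<Rightarrow> 'n pt) \<Rightarrow> ('n pt \<Rightarrow> 'n pt) \<Rightarrow> ('n pt \<Rightarrow> 'n pt)
     \<Rightarrow> 'n pt \<Rightarrow> 'n pt" where
  "curvR M X Y Z p = nabla M X (nabla M Y Z) p - nabla M Y (nabla M X Z) p - nabla M (lie M X Y) Z p"

text \<open>Extension of a tangent vector at p to a smooth tangent vector field
  (the pointwise tensors below do not depend on the choice).\<close>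
definition ext_field :: "('n::finite) pt set \<Rightarrow> 'n pt \<Rightarrow> 'n pt \<Rightarrow> ('n pt \<Rightarrow> 'n pt)" where
  "ext_field M p v = (SOME X. tangent_field M X \<and> X p = v)"

definition sigma :: "('n::finite) pt set \<Rightarrow> 'n pt \<Rightarrow> 'n pt \<Rightarrow> 'n pt \<Rightarrow> 'n pt" where
  "sigma M p x y = flatD M (ext_field M p x) (ext_field M p y) p - nabla M (ext_field M p x) (ext_field M p y) p"

definition Rp :: "('n::finite) pt set \<Rightarrow> 'n pt \<Rightarrow> 'n pt \<Rightarrow> 'n pt \<Rightarrow> 'n pt \<Rightarrow> 'n pt" where
  "Rp M p x y z = curvR M (ext_field M p x) (ext_field M p y) (ext_field M p z) p"

definition R4 :: "('n::finite) pt set \<Rightarrow> 'n pt \<Rightarrow> 'n pt \<Rightarrow> 'n pt \<Rightarrow> 'n pt \<Rightarrow> 'n pt \<Rightarrow> real" where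
  "R4 M p x y z u = gN (Rp M p x y z) u"

definition Rt4 :: "('n::finite) pt set \<Rightarrow> 'n pt \<Rightarrow> 'n pt \<Rightarrow> 'n pt \<Rightarrow> 'n pt \<Rightarrow> 'n pt \<Rightarrow> real" where
  "Rt4 M p x y z u = R4 M p x y z (Jop u)"

definition pi1 :: "('n::finite) pt \<Rightarrow> 'n pt \<Rightarrow> 'n pt \<Rightarrow> 'n pt \<Rightarrow> real" where
  "pi1 x y z u = gN y z * gN x u - gN x z * gN y u"

definition Ksec :: "('n::finite) pt set \<Rightarrow> 'n pt \<Rightarrow> 'n pt \<Rightarrow> 'n pt \<Rightarrow> real" where
  "Ksec M p x y = R4 M p x y y x / pi1 x y y x"

definition Ktsec :: "('n::finite) pt set \<Rightarrow> 'n pt \<Rightarrow> 'n pt \<Rightarrow> 'n pt \<Rightarrow> real" where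
  "Ktsec M p x y = Rt4 M p x y y x / pi1 x y y x"

definition g_orthonormal_basis :: "('n::finite) pt set \<Rightarrow> 'n pt list \<Rightarrow> bool" where
  "g_orthonormal_basis V es \<longleftrightarrow> distinct es \<and> independent (set es) \<and> span (set es) = V \<and>
     (\<forall>i<length es. \<forall>j<length es. i \<noteq> j \<longrightarrow> gN (es!i) (es!j) = 0) \<and>
     (\<forall>e\<in>set es. gN e e = 1 \<or> gN e e = -1)"

definition trace_g :: "('n::finite) pt set \<Rightarrow> ('n pt \<Rightarrow> 'n pt \<Rightarrow> 'n pt) \<Rightarrow> 'n pt" where
  "trace_g V B = (let es = (SOME es. g_orthonormal_basis V es) in (\<Sum>e\<leftarrow>es. gN e e *\<^sub>R B e e))"

definition meanH :: "nat \<Rightarrow> ('n::finite) pt set \<Rightarrow> 'n pt \<Rightarrow> 'n pt" where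
  "meanH n M p = (1 / (2 * real n)) *\<^sub>R trace_g (tangent_space M p) (sigma M p)"

definition h_umbilical :: "nat \<Rightarrow> ('n::finite) pt set \<Rightarrow> bool" where
  "h_umbilical n M \<longleftrightarrow> (\<forall>p\<in>M. \<forall>x\<in>tangent_space M p. \<forall>y\<in>tangent_space M p.
      sigma M p x y = gN x y *\<^sub>R meanH n M p - gT x y *\<^sub>R Jop (meanH n M p))"

definition totally_real :: "('n::finite) pt set \<Rightarrow> bool" where
  "totally_real \<beta> \<longleftrightarrow> Jop ` \<beta> \<noteq> \<beta> \<and> (\<forall>u\<in>\<beta>. \<forall>w\<in>\<beta>. gN u (Jop w) = 0)"

definition const_totally_real_curv :: "('n::finite) pt set \<Rightarrow> real \<Rightarrow> real \<Rightarrow> bool" where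
  "const_totally_real_curv M \<nu> \<nu>t \<longleftrightarrow>
    (\<forall>p\<in>M. \<forall>\<beta> x y. subspace \<beta> \<and> \<beta> \<subseteq> tangent_space M p \<and> dim \<beta> = 2 \<and> nondeg \<beta> \<and>
        totally_real \<beta> \<and> x \<in> \<beta> \<and> y \<in> \<beta> \<and> span {x, y} = \<beta> \<longrightarrow>
        Ksec M p x y = \<nu> \<and> Ktsec M p x y = \<nu>t)"

end

theory Submission
  imports Defs "HOL-Analysis.Complex_Transcendental"
begin


lemma gN_add_left[simp]: "gN (u + v) w = gN u w + gN v w"
  by (simp add: gN_def inner_add_left)
lemma gN_add_right[simp]: "gN w (u + v) = gN w u + gN w v"
  by (simp add: gN_def inner_add_right)
lemma gN_diff_left: "gN (u - v) w = gN u w - gN v w"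
  by (simp add: gN_def inner_diff_left)
lemma gN_diff_right: "gN w (u - v) = gN w u - gN w v"
  by (simp add: gN_def inner_diff_right)
lemma gN_minus_left[simp]: "gN (- u) w = - gN u w"
  by (simp add: gN_def)
lemma gN_minus_right[simp]: "gN w (- u) = - gN w u"
  by (simp add: gN_def)
lemma gN_scaleR_left[simp]: "gN (c *\<^sub>R u) w = c * gN u w"
  by (simp add: gN_def algebra_simps)
lemma gN_scaleR_right[simp]: "gN w (c *\<^sub>R u) = c * gN w u"
  by (simp add: gN_def algebra_simps)
lemma gN_zero_left[simp]: "gN 0 w = 0" by (simp add: gN_def)
lemma gN_zero_right[simp]: "gN w 0 = 0" by (simp add: gN_def)
lemma gN_sym: "gN u w = gN w u" by (simp add: gN_def inner_commute)
lemma gN_sum_left: "gN (sum f S) w = (\<Sum>x\<in>S. gN (f x) w)"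
  by (induct S rule: infinite_finite_induct) auto
lemma gN_sum_right: "gN w (sum f S) = (\<Sum>x\<in>S. gN w (f x))"
  by (induct S rule: infinite_finite_induct) auto

lemma Jop_add[simp]: "Jop (u + v) = Jop u + Jop v" by (simp add: Jop_def)
lemma Jop_diff: "Jop (u - v) = Jop u - Jop v" by (simp add: Jop_def)
lemma Jop_minus[simp]: "Jop (- u) = - Jop u" by (simp add: Jop_def)
lemma Jop_scaleR[simp]: "Jop (c *\<^sub>R u) = c *\<^sub>R Jop u" by (simp add: Jop_def)
lemma Jop_zero[simp]: "Jop 0 = 0" by (simp add: Jop_def zero_prod_def)
lemma Jop_Jop[simp]: "Jop (Jop u) = - u" by (simp add: Jop_def prod_eq_iff)
lemma Jop_sum: "Jop (sum f S) = (\<Sum>x\<in>S. Jop (f x))"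
  by (induct S rule: infinite_finite_induct) auto
lemma gN_JJ[simp]: "gN (Jop u) (Jop w) = - gN u w"
  by (simp add: gN_def Jop_def inner_commute)
lemma gN_J_swap: "gN (Jop u) w = gN u (Jop w)"
  by (simp add: gN_def Jop_def inner_commute)
lemma gN_J_self: "gN (Jop u) u = gN u (Jop u)"
  by (rule gN_J_swap)
lemma linear_Jop: "linear Jop"
  by (rule linearI) auto
lemma bounded_linear_Jop: "bounded_linear Jop"
  using linear_Jop linear_conv_bounded_linear by blast
lemma gN_eq_0_imp: "(\<And>w. gN v w = 0) \<Longrightarrow> v = 0"
proof -
  assume h: "\<And>w. gN v w = 0"
  have "gN v (fst v, - snd v) = 0" by (rule h)
  hence "fst v \<bullet> fst v + snd v \<bullet> snd v = 0" by (simp add: gN_def)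
  hence "fst v = 0 \<and> snd v = 0"
    by (metis add_nonneg_eq_0_iff inner_eq_zero_iff inner_ge_zero)
  thus "v = 0" by (simp add: prod_eq_iff)
qed

lemma bilinear_gN: "bilinear gN"
  unfolding bilinear_def
  by (intro conjI allI linearI) (simp_all only: gN_add_left gN_add_right gN_scaleR_left gN_scaleR_right real_scaleR_def)
lemma bounded_bilinear_gN: "bounded_bilinear gN"
  using bilinear_gN bilinear_conv_bounded_bilinear by blast


locale sph =
  fixes z0 :: "('n::finite) pt" and a b :: real
  assumes ab: "(a, b) \<noteq> (0, 0)"
begin

definition "M = hsphere z0 a b"
definition "DD = a\<^sup>2 + b\<^sup>2"
definition "NP q w = ((a * gN w (q - z0) + b * gN w (Jop (q - z0))) / DD) *\<^sub>R (q - z0)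
   + ((b * gN w (q - z0) - a * gN w (Jop (q - z0))) / DD) *\<^sub>R Jop (q - z0)"
definition "PP q w = w - NP q w"
definition "Tq q = {v. gN (q - z0) v = 0 \<and> gN (Jop (q - z0)) v = 0}"

lemma DD_pos: "DD > 0"
  using ab unfolding DD_def by (auto simp: sum_power2_gt_zero_iff)
lemma DD_nz: "DD \<noteq> 0" using DD_pos by simp

lemma M_iff: "q \<in> M \<longleftrightarrow> gN (q - z0) (q - z0) = a \<and> gN (Jop (q - z0)) (q - z0) = b"
  by (simp add: M_def hsphere_def gT_def)

lemma NP_W: assumes "q \<in> M" shows "gN (NP q w) (q - z0) = gN w (q - z0)"
proof -
  have 1: "gN (q - z0) (q - z0) = a" "gN (Jop (q - z0)) (q - z0) = b" using assms M_iff by auto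
  have "gN (NP q w) (q - z0) = ((a * gN w (q - z0) + b * gN w (Jop (q - z0))) / DD) * a
      + ((b * gN w (q - z0) - a * gN w (Jop (q - z0))) / DD) * b"
    unfolding NP_def by (simp only: gN_add_left gN_scaleR_left 1)
  also have "\<dots> = gN w (q - z0)" using DD_nz
    by (simp add: divide_simps) (simp add: DD_def algebra_simps power2_eq_square)
  finally show ?thesis .
qed

lemma NP_JW: assumes "q \<in> M" shows "gN (NP q w) (Jop (q - z0)) = gN w (Jop (q - z0))"
proof -
  have 1: "gN (q - z0) (Jop (q - z0)) = b" "gN (Jop (q - z0)) (Jop (q - z0)) = - a"
    using assms M_iff gN_J_swap[of "q - z0" "q - z0"] by auto
  have "gN (NP q w) (Jop (q - z0)) = ((a * gN w (q - z0) + b * gN w (Jop (q - z0))) / DD) * b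
      + ((b * gN w (q - z0) - a * gN w (Jop (q - z0))) / DD) * (- a)"
    unfolding NP_def by (simp only: gN_add_left gN_scaleR_left 1)
  also have "\<dots> = gN w (Jop (q - z0))" using DD_nz
    by (simp add: divide_simps) (simp add: DD_def algebra_simps power2_eq_square)
  finally show ?thesis .
qed

lemma PP_T: assumes "q \<in> M" shows "PP q w \<in> Tq q"
proof -
  have 1: "gN (PP q w) (q - z0) = 0" unfolding PP_def
    by (simp only: gN_diff_left NP_W[OF assms] diff_self)
  have 2: "gN (PP q w) (Jop (q - z0)) = 0" unfolding PP_def
    by (simp only: gN_diff_left NP_JW[OF assms] diff_self)
  show ?thesis unfolding Tq_def using 1 2 gN_sym[of "PP q w"] by simp
qed

lemma NP_T: "v \<in> Tq q \<Longrightarrow> NP q v = 0"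
  by (simp add: NP_def Tq_def gN_sym)

lemma NP_orth: assumes "v \<in> Tq q" shows "gN (NP q w) v = 0"
  using assms by (simp add: NP_def Tq_def gN_sym)

lemma NP_add: "NP q (u + v) = NP q u + NP q v"
  by (simp add: NP_def algebra_simps add_divide_distrib diff_divide_distrib)
lemma NP_scaleR: "NP q (c *\<^sub>R u) = c *\<^sub>R NP q u"
  by (simp add: NP_def algebra_simps add_divide_distrib diff_divide_distrib)
lemma linear_NP: "linear (NP q)"
  by (rule linearI) (simp_all add: NP_add NP_scaleR)

lemma Tq_J: assumes "v \<in> Tq q" shows "Jop v \<in> Tq q"
  using assms gN_J_swap[of "q - z0" v] by (simp add: Tq_def)

lemma Tq_J_eq: "Jop ` Tq q = Tq q"
proof
  show "Jop ` Tq q \<subseteq> Tq q" using Tq_J by blast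
  show "Tq q \<subseteq> Jop ` Tq q"
  proof
    fix v assume "v \<in> Tq q"
    hence "- Jop v \<in> Tq q" using Tq_J by (simp add: Tq_def)
    moreover have "v = Jop (- Jop v)" by simp
    ultimately show "v \<in> Jop ` Tq q" by blast
  qed
qed

lemma subspace_Tq: "subspace (Tq q)"
  unfolding subspace_def Tq_def by simp

lemma PP_id: "v \<in> Tq q \<Longrightarrow> PP q v = v"
  by (simp add: PP_def NP_T)

lemma decomp: "w = PP q w + NP q w" by (simp add: PP_def)

lemma nondeg_Tq: assumes "q \<in> M" shows "nondeg (Tq q)"
  unfolding nondeg_def
proof (intro ballI impI)
  fix v assume v: "v \<in> Tq q" and h: "\<forall>w\<in>Tq q. gN v w = 0"
  have "gN v w = 0" for w
  proof -
    have "gN v w = gN v (PP q w) + gN v (NP q w)" by (subst decomp[of w q]) simp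
    also have "gN v (PP q w) = 0" using h PP_T[OF assms] by blast
    also have "gN v (NP q w) = 0" using NP_orth[OF v] by (simp add: gN_sym)
    finally show ?thesis by simp
  qed
  thus "v = 0" by (rule gN_eq_0_imp)
qed

lemma gN_PP: assumes "v \<in> Tq q" shows "gN (PP q w) v = gN w v"
  using NP_orth[OF assms] by (simp add: PP_def gN_diff_left)

end


lemma tangent_in: "v \<in> tangent_space S p \<Longrightarrow> p \<in> S"
  unfolding tangent_space_def by force

lemma tangent_deriv_unique:
  assumes D: "(f has_derivative D) (at p within S)" and D': "(f has_derivative D') (at p within S)"
    and v: "v \<in> tangent_space S p"
  shows "D v = D' v"
proof -
  obtain \<gamma> where g0: "\<gamma> 0 = p" and gS: "\<forall>t\<in>{-1<..<1}. \<gamma> t \<in> S"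
    and gd: "(\<gamma> has_vector_derivative v) (at 0)"
    using v unfolding tangent_space_def by blast
  let ?I = "{-1<..<1::real}"
  have gd': "(\<gamma> has_derivative (\<lambda>t. t *\<^sub>R v)) (at 0 within ?I)"
    using gd unfolding has_vector_derivative_def by (rule has_derivative_at_withinI)
  have sub: "\<gamma> ` ?I \<subseteq> S" using gS by blast
  have c1: "((f \<circ> \<gamma>) has_derivative (D \<circ> (\<lambda>t. t *\<^sub>R v))) (at 0 within ?I)"
    by (rule diff_chain_within[OF gd']) (use has_derivative_subset[OF D sub] g0 in simp)
  have c2: "((f \<circ> \<gamma>) has_derivative (D' \<circ> (\<lambda>t. t *\<^sub>R v))) (at 0 within ?I)"
    by (rule diff_chain_within[OF gd']) (use has_derivative_subset[OF D' sub] g0 in simp)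
  have at: "at (0::real) within ?I = at 0" by (rule at_within_open) auto
  have "D \<circ> (\<lambda>t. t *\<^sub>R v) = D' \<circ> (\<lambda>t. t *\<^sub>R v)"
    using c1 c2 unfolding at by (rule has_derivative_unique)
  hence "(D \<circ> (\<lambda>t. t *\<^sub>R v)) 1 = (D' \<circ> (\<lambda>t. t *\<^sub>R v)) 1" by simp
  thus ?thesis by simp
qed

lemma tangent_deriv_const:
  assumes D: "(f has_derivative D) (at p within S)" and c: "\<And>x. x \<in> S \<Longrightarrow> f x = c"
    and v: "v \<in> tangent_space S p"
  shows "D v = 0"
proof -
  have pS: "p \<in> S" using tangent_in[OF v] .
  have "(f has_derivative (\<lambda>_. 0)) (at p within S)"
    by (rule has_derivative_transform_within[OF has_derivative_const[of c] zero_less_one pS])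
       (simp add: c)
  from tangent_deriv_unique[OF D this v] show ?thesis .
qed

context sph begin

lemma tangent_sub: assumes v: "v \<in> tangent_space M q" shows "v \<in> Tq q"
proof -
  have qM: "q \<in> M" using tangent_in[OF v] .
  have fd: "((\<lambda>x. x - z0) has_derivative (\<lambda>h. h)) (at q within M)"
    by (auto intro!: derivative_eq_intros)
  have d1: "((\<lambda>x. gN (x - z0) (x - z0)) has_derivative (\<lambda>h. gN (q - z0) h + gN h (q - z0))) (at q within M)"
    using bounded_bilinear.FDERIV[OF bounded_bilinear_gN fd fd] .
  have j: "((\<lambda>x. Jop (x - z0)) has_derivative (\<lambda>h. Jop h)) (at q within M)"
    using bounded_linear.has_derivative[OF bounded_linear_Jop fd] by simp
  have d2: "((\<lambda>x. gN (Jop (x - z0)) (x - z0)) has_derivative (\<lambda>h. gN (Jop (q - z0)) h + gN (Jop h) (q - z0))) (at q within M)"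
    using bounded_bilinear.FDERIV[OF bounded_bilinear_gN j fd] .
  have e1: "gN (q - z0) v + gN v (q - z0) = 0"
    by (rule tangent_deriv_const[OF d1 _ v, of a]) (simp add: M_iff)
  have e2: "gN (Jop (q - z0)) v + gN (Jop v) (q - z0) = 0"
    by (rule tangent_deriv_const[OF d2 _ v, of b]) (simp add: M_iff)
  have "gN (Jop v) (q - z0) = gN (Jop (q - z0)) v"
    by (simp add: gN_J_swap gN_sym)
  thus ?thesis using e1 e2 by (simp add: Tq_def gN_sym[of v])
qed


lemma sph_point:
  assumes qM: "q \<in> M" and v: "v \<in> Tq q"
    and mu: "\<mu>\<^sup>2 * Complex a b = Complex a b - (complex_of_real s)\<^sup>2 * Complex (gN v v) (gN (Jop v) v)"
  shows "z0 + (Re \<mu> *\<^sub>R (q - z0) - Im \<mu> *\<^sub>R Jop (q - z0) + s *\<^sub>R v) \<in> M"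
proof -
  define W where "W = q - z0"
  define \<alpha> where "\<alpha> = Re \<mu>"
  define \<beta> where "\<beta> = Im \<mu>"
  have e1: "(\<alpha>\<^sup>2 - \<beta>\<^sup>2) * a - 2 * \<alpha> * \<beta> * b = a - s\<^sup>2 * gN v v"
    using arg_cong[OF mu, of Re] by (simp add: \<alpha>_def \<beta>_def Re_power2 Im_power2 power2_eq_square) (simp add: algebra_simps)
  have e2: "(\<alpha>\<^sup>2 - \<beta>\<^sup>2) * b + 2 * \<alpha> * \<beta> * a = b - s\<^sup>2 * gN (Jop v) v"
    using arg_cong[OF mu, of Im] by (simp add: \<alpha>_def \<beta>_def Re_power2 Im_power2 power2_eq_square) (simp add: algebra_simps)
  have WW: "gN W W = a" "gN (Jop W) W = b" using qM by (auto simp: M_iff W_def)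
  have WJW: "gN W (Jop W) = b" using WW gN_J_swap[of W W] by simp
  have JWJW: "gN (Jop W) (Jop W) = - a" using WW by simp
  have vv: "gN W v = 0" "gN (Jop W) v = 0" using v by (auto simp: Tq_def W_def)
  have vv2: "gN v W = 0" "gN v (Jop W) = 0" using vv gN_sym by metis+
  have vv3: "gN (Jop v) W = 0" "gN W (Jop v) = 0" "gN (Jop v) (Jop W) = 0" "gN (Jop W) (Jop v) = 0"
    using vv vv2 gN_J_swap[of v W] gN_J_swap[of W v] by auto
  have vv4: "gN v (Jop v) = gN (Jop v) v" using gN_sym by metis
  have "gN (\<alpha> *\<^sub>R W - \<beta> *\<^sub>R Jop W + s *\<^sub>R v) (\<alpha> *\<^sub>R W - \<beta> *\<^sub>R Jop W + s *\<^sub>R v)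
      = \<alpha> * \<alpha> * a - \<alpha> * \<beta> * b - \<beta> * \<alpha> * b + \<beta> * \<beta> * (- a) + s * s * gN v v"
    by (simp add: gN_diff_left gN_diff_right WW WJW JWJW vv vv2) (simp add: algebra_simps)
  also have "\<dots> = a" using e1 by (simp add: power2_eq_square algebra_simps)
  finally have f1: "gN (\<alpha> *\<^sub>R W - \<beta> *\<^sub>R Jop W + s *\<^sub>R v) (\<alpha> *\<^sub>R W - \<beta> *\<^sub>R Jop W + s *\<^sub>R v) = a" .
  have "gN (Jop (\<alpha> *\<^sub>R W - \<beta> *\<^sub>R Jop W + s *\<^sub>R v)) (\<alpha> *\<^sub>R W - \<beta> *\<^sub>R Jop W + s *\<^sub>R v)
      = \<alpha> * \<alpha> * b - \<alpha> * \<beta> * (-a) + \<beta> * \<alpha> * a - \<beta> * \<beta> * b + s * s * gN (Jop v) v"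
    by (simp add: gN_diff_left gN_diff_right Jop_diff WW WJW JWJW vv vv2 vv3 vv4) (simp add: algebra_simps)
  also have "\<dots> = b" using e2 by (simp add: power2_eq_square algebra_simps)
  finally have f2: "gN (Jop (\<alpha> *\<^sub>R W - \<beta> *\<^sub>R Jop W + s *\<^sub>R v)) (\<alpha> *\<^sub>R W - \<beta> *\<^sub>R Jop W + s *\<^sub>R v) = b" .
  show ?thesis using f1 f2 by (simp add: M_iff W_def \<alpha>_def \<beta>_def)
qed


lemma tangent_sup:
  assumes qM: "q \<in> M" and v: "v \<in> Tq q"
  shows "v \<in> tangent_space M q"
proof -
  define cc where "cc = Complex a b"
  define qv where "qv = Complex (gN v v) (gN (Jop v) v)"
  define r where "r = qv / cc"
  define h where "h = (\<lambda>z. csqrt (1 - z\<^sup>2 * r))"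
  define \<gamma> where "\<gamma> = (\<lambda>t. z0 + (Re (h (of_real t)) *\<^sub>R (q - z0) - Im (h (of_real t)) *\<^sub>R Jop (q - z0) + t *\<^sub>R v))"
  have cc: "cc \<noteq> 0" using ab by (auto simp: cc_def complex_eq_iff)
  have mem: "\<gamma> t \<in> M" for t
  proof -
    have "(h (of_real t))\<^sup>2 * cc = cc - (complex_of_real t)\<^sup>2 * qv"
      using cc by (simp add: h_def r_def algebra_simps)
    thus ?thesis unfolding \<gamma>_def using sph_point[OF qM v] by (simp add: cc_def qv_def)
  qed
  have one: "(1::complex) \<notin> \<real>\<^sub>\<le>\<^sub>0" by (simp add: nonpos_Reals_def)
  have hd: "(h has_field_derivative 0) (at (of_real 0))"
    unfolding h_def
    by (rule derivative_eq_intros refl | simp add: one)+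
  have md: "((\<lambda>t. h (of_real t)) has_vector_derivative 0) (at 0)"
    using has_vector_derivative_real_field[OF hd] .
  have h0: "h 0 = 1" by (simp add: h_def)
  have "(\<gamma> has_vector_derivative (0 + ((Re (h (of_real 0)) *\<^sub>R 0 + Re 0 *\<^sub>R (q - z0))
        - (Im (h (of_real 0)) *\<^sub>R 0 + Im 0 *\<^sub>R Jop (q - z0)) + (0 *\<^sub>R 0 + 1 *\<^sub>R v)))) (at 0)"
    unfolding \<gamma>_def
    by (intro derivative_intros has_field_derivative_Re has_field_derivative_Im md)
  hence "(\<gamma> has_vector_derivative v) (at 0)" by simp
  moreover have "\<gamma> 0 = q" by (simp add: \<gamma>_def h0)
  ultimately show ?thesis unfolding tangent_space_def using mem by blast
qed

lemma tangent_eq: assumes "q \<in> M" shows "tangent_space M q = Tq q"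
  using tangent_sub tangent_sup[OF assms] by blast

end


lemma Ck_class:
  assumes P: "\<And>f. f \<in> P \<Longrightarrow> (\<forall>x. f differentiable (at x)) \<and> continuous_on UNIV f \<and>
                     (\<forall>v. (\<lambda>x. frechet_derivative f (at x) v) \<in> P)"
  shows "f \<in> P \<Longrightarrow> Ck_on k U f"
proof (induction k arbitrary: f)
  case 0 thus ?case using P continuous_on_subset by fastforce
next
  case (Suc k) thus ?case using P by auto
qed

definition QC :: "('a::euclidean_space \<Rightarrow> 'b::euclidean_space) set" where
  "QC = {f. \<exists>Q L c. bounded_bilinear Q \<and> bounded_linear L \<and> f = (\<lambda>x. Q x x + L x + c)}"

lemma bb_zero: "bounded_bilinear (\<lambda>(x::'a::euclidean_space) (y::'a). (0::'b::euclidean_space))"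
  by (subst bilinear_conv_bounded_bilinear[symmetric]) (simp add: bilinear_def linear_zero)

lemma QC_props:
  assumes "f \<in> QC"
  shows "(\<forall>x. f differentiable (at x)) \<and> continuous_on UNIV f \<and> (\<forall>v. (\<lambda>x. frechet_derivative f (at x) v) \<in> QC)"
proof -
  obtain Q L c where Q: "bounded_bilinear Q" and L: "bounded_linear L" and f: "f = (\<lambda>x. Q x x + L x + c)"
    using assms unfolding QC_def by blast
  have d: "(f has_derivative (\<lambda>h. Q x h + Q h x + L h)) (at x)" for x
  proof -
    have "((\<lambda>x. Q x x) has_derivative (\<lambda>h. Q x h + Q h x)) (at x)"
      using bounded_bilinear.FDERIV[OF Q has_derivative_ident has_derivative_ident] .
    from has_derivative_add[OF has_derivative_add[OF this bounded_linear.has_derivative[OF L has_derivative_ident]] has_derivative_const]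
    show ?thesis unfolding f by simp
  qed
  have fd: "frechet_derivative f (at x) = (\<lambda>h. Q x h + Q h x + L h)" for x
    using frechet_derivative_at[OF d] by simp
  have 1: "\<forall>x. f differentiable (at x)" using d differentiable_def by blast
  have 2: "continuous_on UNIV f"
    using 1 differentiable_imp_continuous_on differentiable_on_def differentiable_at_withinI by blast
  have 3: "(\<lambda>x. frechet_derivative f (at x) v) \<in> QC" for v
  proof -
    have "bounded_linear (\<lambda>x. Q x v + Q v x)"
      using bounded_linear_add[OF bounded_bilinear.bounded_linear_left[OF Q] bounded_bilinear.bounded_linear_right[OF Q]] .
    moreover have "(\<lambda>x. frechet_derivative f (at x) v) = (\<lambda>x. (\<lambda>x y. 0) x x + (\<lambda>x. Q x v + Q v x) x + L v)"
      by (simp add: fd)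
    ultimately show ?thesis unfolding QC_def using bb_zero by blast
  qed
  show ?thesis using 1 2 3 by blast
qed

lemma QC_Ck: "f \<in> QC \<Longrightarrow> Ck_on k U f"
  by (rule Ck_class[of QC]) (use QC_props in auto)

lemma QC_smooth: "f \<in> QC \<Longrightarrow> smooth_on UNIV f"
  unfolding smooth_on_def using QC_Ck by blast

lemma QC_shift:
  assumes Q: "bounded_bilinear Q" and L: "bounded_linear L"
  shows "(\<lambda>x. Q (x - z) (x - z) + L (x - z) + c) \<in> QC"
proof -
  have e: "Q (x - z) (x - z) + L (x - z) + c = Q x x + ((- Q x z - Q z x) + L x) + (Q z z - L z + c)" for x
    by (simp add: bounded_bilinear.diff_left[OF Q] bounded_bilinear.diff_right[OF Q]
        linear_diff[OF bounded_linear.linear[OF L]] algebra_simps)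
  have "bounded_linear (\<lambda>x. (- Q x z - Q z x) + L x)"
    by (intro bounded_linear_add bounded_linear_sub bounded_linear_minus L
        bounded_bilinear.bounded_linear_left[OF Q] bounded_bilinear.bounded_linear_right[OF Q])
  thus ?thesis unfolding QC_def e using Q by blast
qed


definition QF :: "('n::finite) pt \<Rightarrow> 'n pt \<Rightarrow> real \<times> real" where
  "QF x y = (gN x y, gN (Jop x) y)"

lemma bb_QF: "bounded_bilinear QF"
  by (subst bilinear_conv_bounded_bilinear[symmetric], unfold bilinear_def)
     (intro conjI allI linearI; simp add: QF_def)

context sph begin

definition "FF x = QF (x - z0) (x - z0) - (a, b)"

lemma FF_QC: "FF \<in> QC"
proof -
  have "FF = (\<lambda>x. QF (x - z0) (x - z0) + (\<lambda>_. 0) (x - z0) + (- (a, b)))"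
    by (auto simp: FF_def)
  thus ?thesis using QC_shift[OF bb_QF bounded_linear_zero] by simp
qed

lemma FF_deriv: "(FF has_derivative (\<lambda>h. QF (q - z0) h + QF h (q - z0))) (at q)"
proof -
  have fd: "((\<lambda>x. x - z0) has_derivative (\<lambda>h. h)) (at q)"
    by (auto intro!: derivative_eq_intros)
  show ?thesis unfolding FF_def
    using has_derivative_diff[OF bounded_bilinear.FDERIV[OF bb_QF fd fd] has_derivative_const] by simp
qed

lemma FF_zero: "FF q = 0 \<longleftrightarrow> q \<in> M"
  by (auto simp: FF_def QF_def M_iff zero_prod_def)

lemma FF_surj: assumes qM: "q \<in> M" shows "surj (frechet_derivative FF (at q))"
proof -
  have fd: "frechet_derivative FF (at q) = (\<lambda>h. QF (q - z0) h + QF h (q - z0))"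
    using frechet_derivative_at[OF FF_deriv] by simp
  define W where "W = q - z0"
  have WW: "gN W W = a" "gN (Jop W) W = b" using qM by (auto simp: M_iff W_def)
  have WJW: "gN W (Jop W) = b" using WW gN_J_swap[of W W] by simp
  have JWJW: "gN (Jop W) (Jop W) = - a" using WW by simp
  show ?thesis unfolding surj_def
  proof
    fix y :: "real \<times> real"
    obtain s t where y: "y = (s, t)" by (cases y)
    define h where "h = ((a * s + b * t) / (2 * DD)) *\<^sub>R W + ((b * s - a * t) / (2 * DD)) *\<^sub>R Jop W"
    have e1: "gN W h + gN h W = s"
      using DD_nz by (simp add: h_def WW WJW gN_sym[of W "Jop W"] field_simps)
         (simp add: DD_def algebra_simps power2_eq_square)
    have e2: "gN (Jop W) h + gN (Jop h) W = t"
      using DD_nz by (simp add: h_def WW WJW JWJW gN_sym[of W "Jop W"] gN_diff_left field_simps)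
         (simp add: DD_def algebra_simps power2_eq_square)
    have "y = frechet_derivative FF (at q) h"
      using e1 e2 by (simp add: fd QF_def y W_def)
    thus "\<exists>h. y = frechet_derivative FF (at q) h" by blast
  qed
qed

lemma submanifold_M: "submanifold_codim2 M"
  unfolding submanifold_codim2_def
proof
  fix p assume "p \<in> M"
  have "p \<in> UNIV \<and> smooth_on UNIV FF \<and> M \<inter> UNIV = {q \<in> UNIV. FF q = 0} \<and>
        (\<forall>q\<in>M \<inter> UNIV. surj (frechet_derivative FF (at q)))"
    using QC_smooth[OF FF_QC] FF_zero FF_surj by auto
  thus "\<exists>U (F :: 'n pt \<Rightarrow> real \<times> real). p \<in> U \<and> smooth_on U F \<and> M \<inter> U = {q \<in> U. F q = 0} \<and>
        (\<forall>q\<in>M \<inter> U. surj (frechet_derivative F (at q)))" by blast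
qed

lemma holo_M: "holomorphic_hypersurface M"
  unfolding holomorphic_hypersurface_def
  using submanifold_M tangent_eq Tq_J_eq nondeg_Tq by auto

end


lemma dD_eq:
  assumes "(f has_derivative D) (at q within S)" "v \<in> tangent_space S q"
  shows "dD S f q v = D v"
proof -
  have "f differentiable (at q within S)" using assms(1) differentiable_def by blast
  hence "(f has_derivative frechet_derivative f (at q within S)) (at q within S)"
    using frechet_derivative_works by blast
  from tangent_deriv_unique[OF this assms(1,2)] show ?thesis by (simp add: dD_def)
qed

definition Dv :: "('a::real_normed_vector \<Rightarrow> 'b::real_normed_vector) \<Rightarrow> 'a \<Rightarrow> 'a \<Rightarrow> 'b" where
  "Dv f x v = frechet_derivative f (at x) v"

lemma Dv_eq: "Dv f x = frechet_derivative f (at x)"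
  by (rule ext) (simp add: Dv_def)

lemma smooth_props:
  assumes "smooth_on U X" "x \<in> U"
  shows "(X has_derivative Dv X x) (at x)"
    and "\<And>v. ((\<lambda>y. Dv X y v) has_derivative Dv (\<lambda>y. Dv X y v) x) (at x)"
proof -
  have c1: "Ck_on 1 U X" and c2: "Ck_on 2 U X" using assms(1) unfolding smooth_on_def by blast+
  have "X differentiable (at x)" using c1 assms(2) by (simp add: One_nat_def)
  thus "(X has_derivative Dv X x) (at x)" unfolding Dv_eq
    using frechet_derivative_works by blast
  fix v
  have "(\<lambda>y. Dv X y v) differentiable (at x)" using c2 assms(2) by (simp add: numeral_2_eq_2 Dv_def)
  thus "((\<lambda>y. Dv X y v) has_derivative Dv (\<lambda>y. Dv X y v) x) (at x)"
    unfolding Dv_eq[of "\<lambda>y. Dv X y v"] using frechet_derivative_works by blast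
qed

lemma smooth_cont:
  assumes "smooth_on U X"
  shows "continuous_on U (\<lambda>y. Dv (\<lambda>y. Dv X y v) y w)"
proof -
  have c2: "Ck_on 2 U X" using assms(1) unfolding smooth_on_def by blast
  thus ?thesis by (simp add: numeral_2_eq_2 Dv_def)
qed

lemma smooth_open: "smooth_on U X \<Longrightarrow> open U" by (simp add: smooth_on_def)


context sph begin

definition "NN q s t = ((a * s + b * t) / DD) *\<^sub>R (q - z0) + ((b * s - a * t) / DD) *\<^sub>R Jop (q - z0)"

lemma NP_NN: "NP q w = NN q (gN w (q - z0)) (gN w (Jop (q - z0)))"
  by (simp add: NP_def NN_def)

lemma tf_U: assumes "tangent_field M X" shows "\<exists>U. M \<subseteq> U \<and> smooth_on U X"
  using assms unfolding tangent_field_def by blast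

lemma tf_T: assumes "tangent_field M X" "q \<in> M" shows "X q \<in> Tq q"
proof -
  have "X q \<in> tangent_space M q" using assms unfolding tangent_field_def by blast
  thus ?thesis using tangent_eq[OF assms(2)] by simp
qed

lemma tf_deriv: assumes "tangent_field M X" "q \<in> M"
  shows "(X has_derivative Dv X q) (at q)"
proof -
  obtain U where "M \<subseteq> U" "smooth_on U X" using tf_U[OF assms(1)] by blast
  thus ?thesis using smooth_props(1)[of U X q] assms(2) by (meson subsetD)
qed

lemma tf_deriv2: assumes "tangent_field M X" "q \<in> M"
  shows "((\<lambda>y. Dv X y v) has_derivative Dv (\<lambda>y. Dv X y v) q) (at q)"
proof -
  obtain U where "M \<subseteq> U" "smooth_on U X" using tf_U[OF assms(1)] by blast
  thus ?thesis using smooth_props(2)[of U X q] assms(2) by (meson subsetD)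
qed

lemma dD_at: assumes "(f has_derivative D) (at q)" "q \<in> M" "v \<in> Tq q"
  shows "dD M f q v = D v"
proof -
  have "v \<in> tangent_space M q" using assms(3) tangent_eq[OF assms(2)] by simp
  thus ?thesis using dD_eq[OF has_derivative_at_withinI[OF assms(1)]] by blast
qed

lemma key_W:
  assumes Y: "tangent_field M Y" and q: "q \<in> M" and x: "x \<in> Tq q"
  shows "gN (Dv Y q x) (q - z0) = - gN (Y q) x"
    and "gN (Dv Y q x) (Jop (q - z0)) = - gN (Y q) (Jop x)"
proof -
  have dY: "(Y has_derivative Dv Y q) (at q within M)"
    using has_derivative_at_withinI[OF tf_deriv[OF Y q]] .
  have fd: "((\<lambda>x. x - z0) has_derivative (\<lambda>h. h)) (at q within M)"
    by (auto intro!: derivative_eq_intros)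
  have j: "((\<lambda>x. Jop (x - z0)) has_derivative (\<lambda>h. Jop h)) (at q within M)"
    using bounded_linear.has_derivative[OF bounded_linear_Jop fd] by simp
  have xt: "x \<in> tangent_space M q" using x tangent_eq[OF q] by simp
  have "gN (Y q) x + gN (Dv Y q x) (q - z0) = 0"
    by (rule tangent_deriv_const[OF bounded_bilinear.FDERIV[OF bounded_bilinear_gN dY fd] _ xt, of 0])
       (use tf_T[OF Y] in \<open>auto simp: Tq_def gN_sym\<close>)
  thus "gN (Dv Y q x) (q - z0) = - gN (Y q) x" by simp
  have "gN (Y q) (Jop x) + gN (Dv Y q x) (Jop (q - z0)) = 0"
    by (rule tangent_deriv_const[OF bounded_bilinear.FDERIV[OF bounded_bilinear_gN dY j] _ xt, of 0])
       (use tf_T[OF Y] in \<open>auto simp: Tq_def gN_sym\<close>)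
  thus "gN (Dv Y q x) (Jop (q - z0)) = - gN (Y q) (Jop x)" by simp
qed

lemma tan_proj_eq: assumes q: "q \<in> M" shows "tan_proj M q w = PP q w"
  unfolding tan_proj_def tangent_eq[OF q]
proof (rule the1_equality)
  show "PP q w \<in> Tq q \<and> (\<forall>v\<in>Tq q. gN (w - PP q w) v = 0)"
    using PP_T[OF q] NP_orth by (simp add: PP_def)
  show "\<exists>!u. u \<in> Tq q \<and> (\<forall>v\<in>Tq q. gN (w - u) v = 0)"
  proof (rule ex_ex1I)
    show "\<exists>u. u \<in> Tq q \<and> (\<forall>v\<in>Tq q. gN (w - u) v = 0)"
      using PP_T[OF q] NP_orth by (intro exI[of _ "PP q w"]) (simp add: PP_def)
  next
    fix u1 u2 assume h1: "u1 \<in> Tq q \<and> (\<forall>v\<in>Tq q. gN (w - u1) v = 0)"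
      and h2: "u2 \<in> Tq q \<and> (\<forall>v\<in>Tq q. gN (w - u2) v = 0)"
    have "u1 - u2 \<in> Tq q" using h1 h2 subspace_Tq by (simp add: subspace_diff)
    moreover have "\<forall>v\<in>Tq q. gN (u1 - u2) v = 0"
      using h1 h2 by (auto simp: gN_diff_left)
    ultimately have "u1 - u2 = 0" using nondeg_Tq[OF q] unfolding nondeg_def by blast
    thus "u1 = u2" by simp
  qed
qed

lemma sigma_eq:
  assumes p: "p \<in> M" and x: "x \<in> Tq p" and y: "y \<in> Tq p"
    and X: "tangent_field M X" "X p = x" and Y: "tangent_field M Y" "Y p = y"
  shows "flatD M X Y p - nabla M X Y p = NN p (- gN y x) (- gN y (Jop x))"
proof -
  have f: "flatD M X Y p = Dv Y p x"
    unfolding flatD_def X(2) using dD_at[OF tf_deriv[OF Y(1) p] p x] .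
  show ?thesis unfolding nabla_def f tan_proj_eq[OF p] PP_def NP_NN
    using key_W[OF Y(1) p x] Y(2) by simp
qed

definition QN :: "'n pt \<Rightarrow> 'n pt \<Rightarrow> 'n pt \<Rightarrow> 'n pt" where
  "QN v x y = - (((a * gN v x + b * gN v (Jop x)) / DD) *\<^sub>R y + ((b * gN v x - a * gN v (Jop x)) / DD) *\<^sub>R Jop y)"

lemma bb_QN: "bounded_bilinear (QN v)"
  by (subst bilinear_conv_bounded_bilinear[symmetric], unfold bilinear_def)
     (intro conjI allI linearI; simp add: QN_def algebra_simps add_divide_distrib diff_divide_distrib)

lemma ext_exists: assumes p: "p \<in> M" and v: "v \<in> Tq p"
  shows "tangent_field M (\<lambda>q. PP q v) \<and> PP p v = v"
proof -
  have e: "(\<lambda>q. PP q v) = (\<lambda>q. QN v (q - z0) (q - z0) + (\<lambda>_. 0) (q - z0) + v)"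
    by (rule ext) (simp add: PP_def NP_def QN_def gN_sym[of v])
  have "(\<lambda>q. PP q v) \<in> QC" unfolding e by (rule QC_shift[OF bb_QN bounded_linear_zero])
  hence "smooth_on UNIV (\<lambda>q. PP q v)" by (rule QC_smooth)
  moreover have "\<forall>q\<in>M. PP q v \<in> tangent_space M q" using PP_T tangent_eq by blast
  ultimately show ?thesis using PP_id[OF v] unfolding tangent_field_def by blast
qed

lemma ext_field_props: assumes p: "p \<in> M" and v: "v \<in> Tq p"
  shows "tangent_field M (ext_field M p v)" "ext_field M p v p = v"
proof -
  have "\<exists>X. tangent_field M X \<and> X p = v" using ext_exists[OF p v] by blast
  hence "tangent_field M (ext_field M p v) \<and> ext_field M p v p = v"
    unfolding ext_field_def by (rule someI_ex)
  thus "tangent_field M (ext_field M p v)" "ext_field M p v p = v" by auto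
qed

lemma sigma_formula: assumes p: "p \<in> M" and x: "x \<in> Tq p" and y: "y \<in> Tq p"
  shows "sigma M p x y = NN p (- gN y x) (- gN y (Jop x))"
  unfolding sigma_def using sigma_eq[OF p x y ext_field_props[OF p x] ext_field_props[OF p y]] .

end


lemma polar_zero:
  assumes V: "subspace V" and h: "\<forall>u\<in>V. gN u u = 0" and u: "u \<in> V" and w: "w \<in> V"
  shows "gN u w = 0"
proof -
  have "u + w \<in> V" using V u w by (simp add: subspace_add)
  hence "gN (u + w) (u + w) = 0" using h by blast
  hence "gN u u + gN u w + gN w u + gN w w = 0" by (simp add: algebra_simps)
  thus ?thesis using h u w gN_sym[of w u] by simp
qed

lemma onb_exists:
  fixes V :: "('n::finite) pt set"
  assumes "subspace V" "nondeg V"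
  shows "\<exists>es. g_orthonormal_basis V es"
  using assms
proof (induction "dim V" arbitrary: V rule: less_induct)
  case less
  note V = less.prems(1) and nd = less.prems(2)
  show ?case
  proof (cases "V \<subseteq> {0}")
    case True
    hence "V = {0}" using V subspace_0 by blast
    hence "g_orthonormal_basis V []" by (simp add: g_orthonormal_basis_def independent_empty)
    thus ?thesis by blast
  next
    case False
    then obtain u0 where u0: "u0 \<in> V" "u0 \<noteq> 0" by blast
    have "\<exists>u\<in>V. gN u u \<noteq> 0"
    proof (rule ccontr)
      assume "\<not> ?thesis"
      hence "\<forall>u\<in>V. gN u u = 0" by blast
      hence "\<forall>w\<in>V. gN u0 w = 0" using polar_zero[OF V] u0 by blast
      thus False using nd u0 unfolding nondeg_def by blast
    qed
    then obtain u where u: "u \<in> V" "gN u u \<noteq> 0" by blast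
    define e where "e = (1 / sqrt \<bar>gN u u\<bar>) *\<^sub>R u"
    have ee: "gN e e = gN u u / \<bar>gN u u\<bar>"
      using u(2) by (simp add: e_def power2_eq_square[symmetric])
    have ee1: "gN e e = 1 \<or> gN e e = -1" unfolding ee using u(2)
      by (cases "gN u u > 0") auto
    have ee2: "gN e e * gN e e = 1" using ee1 by auto
    have eV: "e \<in> V" using u V by (simp add: e_def subspace_scale)
    define V' where "V' = {v \<in> V. gN e v = 0}"
    have V': "subspace V'" using V unfolding V'_def subspace_def by auto
    have dec: "w - (gN e e * gN w e) *\<^sub>R e \<in> V'" if "w \<in> V" for w
    proof -
      have "gN e (w - (gN e e * gN w e) *\<^sub>R e) = gN e w - gN e e * gN w e * gN e e"
        by (simp add: gN_diff_right)
      also have "\<dots> = 0" using ee2 gN_sym[of e w] by (simp add: algebra_simps)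
      finally show ?thesis unfolding V'_def using that eV V
        by (simp add: subspace_diff subspace_scale)
    qed
    have nd': "nondeg V'"
      unfolding nondeg_def
    proof (intro ballI impI)
      fix v assume v: "v \<in> V'" and h: "\<forall>w\<in>V'. gN v w = 0"
      have "gN v w = 0" if w: "w \<in> V" for w
      proof -
        have "gN v w = gN v (w - (gN e e * gN w e) *\<^sub>R e) + (gN e e * gN w e) * gN v e"
          by (simp add: gN_diff_right)
        also have "gN v e = 0" using v gN_sym[of v e] by (simp add: V'_def)
        finally show ?thesis using h dec[OF w] by simp
      qed
      thus "v = 0" using nd v unfolding nondeg_def V'_def by blast
    qed
    have eV': "e \<notin> V'" using ee1 by (auto simp: V'_def)
    have "V' \<subset> V" using eV eV' unfolding V'_def by blast
    hence "dim V' < dim V" using V V' by (metis dim_psubset span_eq_iff)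
    then obtain es' where es': "g_orthonormal_basis V' es'" using less.hyps V' nd' by blast
    have sub: "set es' \<subseteq> V'" using es' V' unfolding g_orthonormal_basis_def
      using span_superset by blast
    have "g_orthonormal_basis V (e # es')"
      unfolding g_orthonormal_basis_def
    proof (intro conjI)
      show "distinct (e # es')" using es' sub eV' by (auto simp: g_orthonormal_basis_def)
      show "independent (set (e # es'))"
      proof -
        have "e \<notin> span (set es')" "independent (set es')" using es' eV' by (auto simp: g_orthonormal_basis_def)
        thus ?thesis by (simp, metis dependent_insertD)
      qed
      show "span (set (e # es')) = V"
      proof
        show "span (set (e # es')) \<subseteq> V"
          using sub eV V span_minimal[of "set (e # es')" V] unfolding V'_def by auto
        show "V \<subseteq> span (set (e # es'))"
        proof
          fix w assume w: "w \<in> V"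
          have "w - (gN e e * gN w e) *\<^sub>R e \<in> span (set es')"
            using dec[OF w] es' unfolding g_orthonormal_basis_def by simp
          thus "w \<in> span (set (e # es'))" by (auto simp: span_insert)
        qed
      qed
      show "\<forall>i<length (e # es'). \<forall>j<length (e # es'). i \<noteq> j \<longrightarrow> gN ((e # es') ! i) ((e # es') ! j) = 0"
      proof (intro allI impI)
        fix i j assume i: "i < length (e # es')" and j: "j < length (e # es')" and ij: "i \<noteq> j"
        have ort: "gN e x = 0" "gN x e = 0" if "x \<in> set es'" for x
          using that sub gN_sym[of x e] by (auto simp: V'_def)
        show "gN ((e # es') ! i) ((e # es') ! j) = 0"
        proof (cases i)
          case 0
          then obtain j' where "j = Suc j'" using ij by (cases j) auto
          thus ?thesis using 0 j ort by simp
        next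
          case (Suc i')
          show ?thesis
          proof (cases j)
            case 0 thus ?thesis using Suc i ort by simp
          next
            case (Suc j')
            thus ?thesis using \<open>i = Suc i'\<close> i j ij es' unfolding g_orthonormal_basis_def by auto
          qed
        qed
      qed
      show "\<forall>x\<in>set (e # es'). gN x x = 1 \<or> gN x x = -1"
        using ee1 es' unfolding g_orthonormal_basis_def by auto
    qed
    thus ?thesis by blast
  qed
qed


lemma sum_Basis_prod_real:
  fixes f :: "('a::euclidean_space \<times> 'b::euclidean_space) \<Rightarrow> real"
  shows "sum f Basis = sum (\<lambda>i. f (i, 0)) Basis + sum (\<lambda>i. f (0, i)) Basis"
proof -
  have "inj_on (\<lambda>u. (u::'a, 0::'b)) Basis" "inj_on (\<lambda>u. (0::'a, u::'b)) Basis"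
    by (auto intro!: inj_onI Pair_inject)
  thus ?thesis
    unfolding Basis_prod_def
    by (subst sum.union_disjoint) (auto simp: Basis_prod_def sum.reindex)
qed

lemma FB: "(\<Sum>s\<in>(Basis::('n::finite) pt set). gN s s * gN u s * gN s v) = gN u v"
proof -
  have 1: "(\<Sum>i\<in>(Basis::(real^'n) set). gN (i, 0) (i, 0) * gN u (i, 0) * gN (i, 0) v) = fst u \<bullet> fst v"
    by (simp add: gN_def euclidean_inner[of "fst u" "fst v"] inner_commute)
  have 2: "(\<Sum>i\<in>(Basis::(real^'n) set). gN (0, i) (0, i) * gN u (0, i) * gN (0, i) v) = - (snd u \<bullet> snd v)"
    by (simp add: gN_def euclidean_inner[of "snd u" "snd v"] inner_commute sum_negf)
  show ?thesis unfolding sum_Basis_prod_real[where f = "\<lambda>s. gN s s * gN u s * gN s v"] 1 2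
    by (simp add: gN_def)
qed

lemma basis_eps: "s \<in> (Basis::('n::finite) pt set) \<Longrightarrow> gN s s * gN s s = 1"
  by (auto simp: Basis_prod_def gN_def)

lemma basis_J: "s \<in> (Basis::('n::finite) pt set) \<Longrightarrow> gN (Jop s) s = 0"
  by (auto simp: Basis_prod_def gN_def Jop_def)

lemma card_Basis_pt: "card (Basis::('n::finite) pt set) = 2 * CARD('n)"
  using DIM_prod[where 'a="real^'n" and 'b="real^'n"] by simp

lemma onb_orth:
  assumes "g_orthonormal_basis V es" "e \<in> set es" "e' \<in> set es" "e \<noteq> e'"
  shows "gN e e' = 0"
proof -
  obtain i where i: "i < length es" "es ! i = e" using assms(2) by (auto simp: in_set_conv_nth)
  obtain j where j: "j < length es" "es ! j = e'" using assms(3) by (auto simp: in_set_conv_nth)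
  have "i \<noteq> j" using i j assms(4) by auto
  thus ?thesis using assms(1) i j unfolding g_orthonormal_basis_def by blast
qed

lemma onb_eps: "g_orthonormal_basis V es \<Longrightarrow> e \<in> set es \<Longrightarrow> gN e e * gN e e = 1"
  unfolding g_orthonormal_basis_def by fastforce

context sph begin

lemma PB1:
  assumes p: "p \<in> M" and es: "g_orthonormal_basis (Tq p) es"
  shows "(\<Sum>e\<in>set es. (gN e e * gN u e) *\<^sub>R e) = PP p u"
proof -
  define E where "E = set es"
  define s where "s = (\<Sum>e\<in>E. (gN e e * gN u e) *\<^sub>R e)"
  have fin: "finite E" by (simp add: E_def)
  have spE: "span E = Tq p" using es by (simp add: E_def g_orthonormal_basis_def)
  have sT: "s \<in> Tq p" unfolding s_def spE[symmetric]
    by (intro span_sum span_scale span_base)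
  have orth: "gN (u - s) e' = 0" if e': "e' \<in> E" for e'
  proof -
    have "gN s e' = (\<Sum>e\<in>E. gN e e * gN u e * gN e e')"
      by (simp add: s_def gN_sum_left)
    also have "\<dots> = gN e' e' * gN u e' * gN e' e'"
    proof -
      have "(\<Sum>e\<in>E. gN e e * gN u e * gN e e') = gN e' e' * gN u e' * gN e' e' + (\<Sum>e\<in>E - {e'}. gN e e * gN u e * gN e e')"
        using sum.remove[OF fin e'] .
      moreover have "(\<Sum>e\<in>E - {e'}. gN e e * gN u e * gN e e') = 0"
      proof (rule sum.neutral, rule ballI)
        fix e assume e: "e \<in> E - {e'}"
        hence "gN e e' = 0" using onb_orth[OF es, of e e'] e' by (simp add: E_def)
        thus "gN e e * gN u e * gN e e' = 0" by simp
      qed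
      ultimately show ?thesis by simp
    qed
    also have "\<dots> = gN u e'" using onb_eps[OF es] e' by (simp add: E_def algebra_simps)
    finally show ?thesis by (simp add: gN_diff_left)
  qed
  have sub: "subspace {v. gN (u - s) v = 0}" unfolding subspace_def by simp
  have orthT: "gN (u - s) v = 0" if "v \<in> Tq p" for v
    using span_minimal[of E "{v. gN (u - s) v = 0}", OF _ sub] orth that spE by blast
  have "s - PP p u = 0"
  proof -
    have "s - PP p u \<in> Tq p" using sT PP_T[OF p] subspace_Tq by (simp add: subspace_diff)
    moreover have "\<forall>v\<in>Tq p. gN (s - PP p u) v = 0"
    proof
      fix v assume v: "v \<in> Tq p"
      have "gN (s - PP p u) v = gN (NP p u) v - gN (u - s) v"
        by (simp add: PP_def gN_diff_left)
      thus "gN (s - PP p u) v = 0" using NP_orth[OF v] orthT[OF v] by simp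
    qed
    ultimately show ?thesis using nondeg_Tq[OF p] unfolding nondeg_def by blast
  qed
  thus ?thesis by (simp add: s_def E_def)
qed

lemma PB2:
  assumes p: "p \<in> M" and es: "g_orthonormal_basis (Tq p) es"
  shows "(\<Sum>e\<in>set es. gN e e * gN u e * gN e v) = gN (PP p u) v"
proof -
  have "gN (PP p u) v = gN (\<Sum>e\<in>set es. (gN e e * gN u e) *\<^sub>R e) v" using PB1[OF p es] by simp
  also have "\<dots> = (\<Sum>e\<in>set es. gN e e * gN u e * gN e v)" by (simp add: gN_sum_left)
  finally show ?thesis by simp
qed


lemma TR:
  assumes p: "p \<in> M" and es: "g_orthonormal_basis (Tq p) es"
    and L: "\<And>x y. gN (L x) y = gN x (L y)"
  shows "(\<Sum>e\<in>set es. gN e e * gN (L e) e) =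
         (\<Sum>s\<in>Basis. gN s s * gN (L s) s) - (\<Sum>s\<in>Basis. gN s s * gN (NP p (L s)) s)"
proof -
  have "(\<Sum>e\<in>set es. gN e e * gN (L e) e) = (\<Sum>e\<in>set es. gN e e * (\<Sum>s\<in>Basis. gN s s * gN (L e) s * gN s e))"
    by (simp only: FB)
  also have "\<dots> = (\<Sum>e\<in>set es. \<Sum>s\<in>Basis. gN s s * (gN e e * gN (L s) e * gN e s))"
  proof (rule sum.cong[OF refl])
    fix e
    have "gN (L e) s * gN s e = gN (L s) e * gN e s" for s by (metis L gN_sym)
    thus "gN e e * (\<Sum>s\<in>Basis. gN s s * gN (L e) s * gN s e) = (\<Sum>s\<in>Basis. gN s s * (gN e e * gN (L s) e * gN e s))"
      by (simp add: sum_distrib_left algebra_simps)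
  qed
  also have "\<dots> = (\<Sum>s\<in>Basis. \<Sum>e\<in>set es. gN s s * (gN e e * gN (L s) e * gN e s))"
    by (rule sum.swap)
  also have "\<dots> = (\<Sum>s\<in>Basis. gN s s * gN (PP p (L s)) s)"
    by (simp add: sum_distrib_left[symmetric] PB2[OF p es])
  also have "\<dots> = (\<Sum>s\<in>Basis. gN s s * gN (L s) s - gN s s * gN (NP p (L s)) s)"
    by (simp add: PP_def gN_diff_left algebra_simps)
  also have "\<dots> = (\<Sum>s\<in>Basis. gN s s * gN (L s) s) - (\<Sum>s\<in>Basis. gN s s * gN (NP p (L s)) s)"
    by (rule sum_subtractf)
  finally show ?thesis .
qed

lemma FB':
  assumes L: "\<And>x y. gN (L x) y = gN x (L y)"
  shows "(\<Sum>s\<in>(Basis::'n pt set). gN s s * gN (L s) X * gN Y s) = gN Y (L X)"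
proof -
  have "(\<Sum>s\<in>(Basis::'n pt set). gN s s * gN (L s) X * gN Y s) = (\<Sum>s\<in>(Basis::'n pt set). gN s s * gN Y s * gN s (L X))"
    by (simp add: L algebra_simps)
  also have "\<dots> = gN Y (L X)" by (rule FB)
  finally show ?thesis .
qed

lemma NS:
  assumes L: "\<And>x y. gN (L x) y = gN x (L y)"
  shows "(\<Sum>s\<in>(Basis::'n pt set). gN s s * gN (NP p (L s)) s) =
     (a * gN (p - z0) (L (p - z0)) + b * gN (p - z0) (L (Jop (p - z0)))
      + b * gN (Jop (p - z0)) (L (p - z0)) - a * gN (Jop (p - z0)) (L (Jop (p - z0)))) / DD"
proof -
  define W where "W = p - z0"
  have pt: "gN s s * gN (NP p (L s)) s =
     (a / DD) * (gN s s * gN (L s) W * gN W s) + (b / DD) * (gN s s * gN (L s) (Jop W) * gN W s)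
     + (b / DD) * (gN s s * gN (L s) W * gN (Jop W) s) - (a / DD) * (gN s s * gN (L s) (Jop W) * gN (Jop W) s)" for s
    by (simp only: NP_def W_def gN_add_left gN_scaleR_left) (simp add: divide_simps algebra_simps)
  show ?thesis unfolding pt
    by (simp only: sum.distrib sum_subtractf sum_distrib_left[symmetric] FB'[OF L])
       (simp add: W_def add_divide_distrib diff_divide_distrib)
qed

lemma trace_id:
  assumes p: "p \<in> M" and es: "g_orthonormal_basis (Tq p) es"
  shows "(\<Sum>e\<in>set es. gN e e * gN e e) = 2 * real CARD('n) - 2"
proof -
  have 1: "(\<Sum>s\<in>(Basis::'n pt set). gN s s * gN s s) = 2 * real CARD('n)"
  proof -
    have "(\<Sum>s\<in>(Basis::'n pt set). gN s s * gN s s) = (\<Sum>s\<in>(Basis::'n pt set). 1)"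
      by (intro sum.cong refl basis_eps)
    thus ?thesis using card_Basis_pt by simp
  qed
  have WW: "gN (p - z0) (p - z0) = a" "gN (Jop (p - z0)) (p - z0) = b" using p by (auto simp: M_iff)
  have WJW: "gN (p - z0) (Jop (p - z0)) = b" using WW gN_J_swap[of "p - z0" "p - z0"] by simp
  have 2: "(\<Sum>s\<in>(Basis::'n pt set). gN s s * gN (NP p s) s) = 2"
    using NS[of "\<lambda>x. x" p] DD_nz by (simp add: WW WJW) (simp add: DD_def divide_simps power2_eq_square)
  show ?thesis using TR[OF p es, of "\<lambda>x. x"] 1 2 by simp
qed

lemma trace_J:
  assumes p: "p \<in> M" and es: "g_orthonormal_basis (Tq p) es"
  shows "(\<Sum>e\<in>set es. gN e e * gN (Jop e) e) = 0"
proof -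
  have 1: "(\<Sum>s\<in>(Basis::'n pt set). gN s s * gN (Jop s) s) = 0"
    by (intro sum.neutral ballI) (simp add: basis_J)
  have WW: "gN (p - z0) (p - z0) = a" "gN (Jop (p - z0)) (p - z0) = b" using p by (auto simp: M_iff)
  have WJW: "gN (p - z0) (Jop (p - z0)) = b" using WW gN_J_swap[of "p - z0" "p - z0"] by simp
  have 2: "(\<Sum>s\<in>(Basis::'n pt set). gN s s * gN (NP p (Jop s)) s) = 0"
  proof -
    have JW: "gN (Jop (p - z0)) (Jop (p - z0)) = - a" "gN (p - z0) (Jop (Jop (p - z0))) = - a"
      "gN (Jop (p - z0)) (Jop (Jop (p - z0))) = - b" using WW WJW by (simp_all only: gN_JJ Jop_Jop gN_minus_right)
    show ?thesis using NS[of Jop p, OF gN_J_swap] by (simp only: WW WJW JW) simp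
  qed
  show ?thesis using TR[OF p es, of Jop, OF gN_J_swap] 1 2 by simp
qed

end


context sph begin

definition "AA p = (a / DD) *\<^sub>R (p - z0) + (b / DD) *\<^sub>R Jop (p - z0)"
definition "BB p = (b / DD) *\<^sub>R (p - z0) - (a / DD) *\<^sub>R Jop (p - z0)"

lemma NN_lin: "NN p s t = s *\<^sub>R AA p + t *\<^sub>R BB p"
  by (simp add: NN_def AA_def BB_def add_divide_distrib diff_divide_distrib algebra_simps)

lemma onb_some: assumes p: "p \<in> M"
  shows "g_orthonormal_basis (Tq p) (SOME es. g_orthonormal_basis (Tq p) es)"
  using onb_exists[OF subspace_Tq nondeg_Tq[OF p]] by (rule someI_ex)

lemma meanH_eq:
  assumes p: "p \<in> M" and n: "CARD('n) = n + 1" "n \<ge> 1"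
  shows "meanH n M p = - AA p"
proof -
  define es where "es = (SOME es. g_orthonormal_basis (Tq p) es)"
  have es: "g_orthonormal_basis (Tq p) es" using onb_some[OF p] by (simp add: es_def)
  have eT: "e \<in> Tq p" if "e \<in> set es" for e
    using es that span_superset unfolding g_orthonormal_basis_def by blast
  have "trace_g (tangent_space M p) (sigma M p) = (\<Sum>e\<leftarrow>es. gN e e *\<^sub>R sigma M p e e)"
    by (simp add: trace_g_def tangent_eq[OF p] es_def[symmetric])
  also have "\<dots> = (\<Sum>e\<in>set es. gN e e *\<^sub>R sigma M p e e)"
    using es by (simp add: g_orthonormal_basis_def sum_list_distinct_conv_sum_set)
  also have "\<dots> = (\<Sum>e\<in>set es. (- (gN e e * gN e e)) *\<^sub>R AA p + (- (gN e e * gN (Jop e) e)) *\<^sub>R BB p)"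
  proof (rule sum.cong[OF refl])
    fix e assume e: "e \<in> set es"
    show "gN e e *\<^sub>R sigma M p e e = (- (gN e e * gN e e)) *\<^sub>R AA p + (- (gN e e * gN (Jop e) e)) *\<^sub>R BB p"
      unfolding sigma_formula[OF p eT[OF e] eT[OF e]] NN_lin
      by (simp add: gN_sym[of e "Jop e"] algebra_simps)
  qed
  also have "\<dots> = (- (\<Sum>e\<in>set es. gN e e * gN e e)) *\<^sub>R AA p + (- (\<Sum>e\<in>set es. gN e e * gN (Jop e) e)) *\<^sub>R BB p"
    by (simp add: sum.distrib scaleR_sum_left sum_negf sum_subtractf)
  also have "\<dots> = (- (2 * real n)) *\<^sub>R AA p"
    using trace_id[OF p es] trace_J[OF p es] n by simp
  finally have "trace_g (tangent_space M p) (sigma M p) = (- (2 * real n)) *\<^sub>R AA p" .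
  thus ?thesis using n by (simp add: meanH_def)
qed

lemma J_AA: "Jop (AA p) = - BB p"
proof -
  define W where "W = p - z0"
  show ?thesis unfolding AA_def BB_def W_def[symmetric] by (simp add: algebra_simps)
qed

lemma h_umb: assumes n: "CARD('n) = n + 1" "n \<ge> 1" shows "h_umbilical n M"
  unfolding h_umbilical_def
proof (intro ballI)
  fix p x y assume p: "p \<in> M" and x: "x \<in> tangent_space M p" and y: "y \<in> tangent_space M p"
  have x': "x \<in> Tq p" and y': "y \<in> Tq p" using x y tangent_eq[OF p] by auto
  show "sigma M p x y = gN x y *\<^sub>R meanH n M p - gT x y *\<^sub>R Jop (meanH n M p)"
    unfolding sigma_formula[OF p x' y'] NN_lin meanH_eq[OF p n] gT_def Jop_minus J_AA
    by (simp add: gN_sym[of y])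
qed

lemma H_vals: assumes p: "p \<in> M"
  shows "gN (AA p) (AA p) = a / (a\<^sup>2 + b\<^sup>2)" "gT (AA p) (AA p) = - b / (a\<^sup>2 + b\<^sup>2)"
proof -
  have WW: "gN (p - z0) (p - z0) = a" "gN (Jop (p - z0)) (p - z0) = b" using p by (auto simp: M_iff)
  have WJW: "gN (p - z0) (Jop (p - z0)) = b" using WW gN_J_swap[of "p - z0" "p - z0"] by simp
  have JJ: "gN (Jop (p - z0)) (Jop (p - z0)) = - a" using WW by simp
  have "gN (AA p) (AA p) = (a / DD) * (a / DD) * a + (a / DD) * (b / DD) * b + (b / DD) * (a / DD) * b + (b / DD) * (b / DD) * (- a)"
    unfolding AA_def by (simp only: gN_add_left gN_add_right gN_scaleR_left gN_scaleR_right WW WJW JJ) (simp add: algebra_simps)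
  also have "\<dots> = a / (a\<^sup>2 + b\<^sup>2)" using DD_nz
    by (simp add: divide_simps DD_def) (simp add: algebra_simps power2_eq_square)
  finally show "gN (AA p) (AA p) = a / (a\<^sup>2 + b\<^sup>2)" .
  have "gT (AA p) (AA p) = (a / DD) * (a / DD) * b + (a / DD) * (b / DD) * (- a) + (b / DD) * (a / DD) * (- a) + (b / DD) * (b / DD) * (- b)"
    unfolding AA_def gT_def
    by (simp only: Jop_add Jop_scaleR Jop_Jop gN_add_left gN_add_right gN_scaleR_left gN_scaleR_right gN_minus_left gN_minus_right WW WJW JJ)
       (simp add: algebra_simps)
  also have "\<dots> = - b / (a\<^sup>2 + b\<^sup>2)" using DD_nz
    by (simp add: divide_simps DD_def) (simp add: algebra_simps power2_eq_square)
  finally show "gT (AA p) (AA p) = - b / (a\<^sup>2 + b\<^sup>2)" .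
qed

lemma H_vals': assumes p: "p \<in> M" and n: "CARD('n) = n + 1" "n \<ge> 1"
  shows "gN (meanH n M p) (meanH n M p) = a / (a\<^sup>2 + b\<^sup>2)"
    "gT (meanH n M p) (meanH n M p) = - b / (a\<^sup>2 + b\<^sup>2)"
  using H_vals[OF p] meanH_eq[OF p n] by (simp_all add: gT_def)

end


lemma line_deriv_s:
  fixes F :: "'a::real_normed_vector \<Rightarrow> 'b::real_inner"
  assumes "(F has_derivative F') (at (p + s *\<^sub>R u + t *\<^sub>R w))"
  shows "((\<lambda>s. F (p + s *\<^sub>R u + t *\<^sub>R w) \<bullet> c) has_real_derivative (F' u \<bullet> c)) (at s)"
proof -
  have g: "((\<lambda>s. p + s *\<^sub>R u + t *\<^sub>R w) has_derivative (\<lambda>r. r *\<^sub>R u)) (at s)"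
    by (auto intro!: derivative_eq_intros)
  have "((\<lambda>s. F (p + s *\<^sub>R u + t *\<^sub>R w)) has_derivative (\<lambda>r. F' (r *\<^sub>R u))) (at s)"
    using has_derivative_compose[OF g assms] .
  hence "((\<lambda>s. F (p + s *\<^sub>R u + t *\<^sub>R w) \<bullet> c) has_derivative (\<lambda>r. F' (r *\<^sub>R u) \<bullet> c)) (at s)"
    by (rule has_derivative_inner_left)
  moreover have "(\<lambda>r. F' (r *\<^sub>R u) \<bullet> c) = (*) (F' u \<bullet> c)"
    using linear_scale[OF has_derivative_linear[OF assms]] by (auto simp: fun_eq_iff)
  ultimately show ?thesis unfolding has_field_derivative_def by simp
qed

lemma line_deriv_t:
  fixes F :: "'a::real_normed_vector \<Rightarrow> 'b::real_inner"
  assumes "(F has_derivative F') (at (p + s *\<^sub>R u + t *\<^sub>R w))"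
  shows "((\<lambda>t. F (p + s *\<^sub>R u + t *\<^sub>R w) \<bullet> c) has_real_derivative (F' w \<bullet> c)) (at t)"
proof -
  have g: "((\<lambda>t. p + s *\<^sub>R u + t *\<^sub>R w) has_derivative (\<lambda>r. r *\<^sub>R w)) (at t)"
    by (auto intro!: derivative_eq_intros)
  have "((\<lambda>t. F (p + s *\<^sub>R u + t *\<^sub>R w)) has_derivative (\<lambda>r. F' (r *\<^sub>R w))) (at t)"
    using has_derivative_compose[OF g assms] .
  hence "((\<lambda>t. F (p + s *\<^sub>R u + t *\<^sub>R w) \<bullet> c) has_derivative (\<lambda>r. F' (r *\<^sub>R w) \<bullet> c)) (at t)"
    by (rule has_derivative_inner_left)
  moreover have "(\<lambda>r. F' (r *\<^sub>R w) \<bullet> c) = (*) (F' w \<bullet> c)"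
    using linear_scale[OF has_derivative_linear[OF assms]] by (auto simp: fun_eq_iff)
  ultimately show ?thesis unfolding has_field_derivative_def by simp
qed


lemma square_mvt:
  fixes Z :: "'a::real_normed_vector \<Rightarrow> 'b::real_inner"
  assumes h: "h > 0"
    and d1: "\<And>s t. s \<in> {0..h} \<Longrightarrow> t \<in> {0..h} \<Longrightarrow> (Z has_derivative DZ (p + s *\<^sub>R u + t *\<^sub>R w)) (at (p + s *\<^sub>R u + t *\<^sub>R w))"
    and d2: "\<And>s t. s \<in> {0..h} \<Longrightarrow> t \<in> {0..h} \<Longrightarrow> ((\<lambda>y. DZ y u) has_derivative D2 (p + s *\<^sub>R u + t *\<^sub>R w)) (at (p + s *\<^sub>R u + t *\<^sub>R w))"
  shows "\<exists>s\<in>{0..h}. \<exists>t\<in>{0..h}. (Z (p + h *\<^sub>R u + h *\<^sub>R w) - Z (p + h *\<^sub>R u) - Z (p + h *\<^sub>R w) + Z p) \<bullet> c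
      = h * (h * (D2 (p + s *\<^sub>R u + t *\<^sub>R w) w \<bullet> c))"
proof -
  define g where "g = (\<lambda>s. Z (p + s *\<^sub>R u + h *\<^sub>R w) \<bullet> c - Z (p + s *\<^sub>R u + 0 *\<^sub>R w) \<bullet> c)"
  have gd: "DERIV g s :> (DZ (p + s *\<^sub>R u + h *\<^sub>R w) u \<bullet> c - DZ (p + s *\<^sub>R u + 0 *\<^sub>R w) u \<bullet> c)"
    if "0 \<le> s" "s \<le> h" for s
    unfolding g_def using that h
    by (intro DERIV_diff line_deriv_s d1) auto
  obtain \<xi> where xi: "0 < \<xi>" "\<xi> < h"
    and g1: "g h - g 0 = (h - 0) * (DZ (p + \<xi> *\<^sub>R u + h *\<^sub>R w) u \<bullet> c - DZ (p + \<xi> *\<^sub>R u + 0 *\<^sub>R w) u \<bullet> c)"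
    using MVT2[OF h gd] by blast
  define k where "k = (\<lambda>t. DZ (p + \<xi> *\<^sub>R u + t *\<^sub>R w) u \<bullet> c)"
  have kd: "DERIV k t :> (D2 (p + \<xi> *\<^sub>R u + t *\<^sub>R w) w \<bullet> c)" if "0 \<le> t" "t \<le> h" for t
    unfolding k_def using that xi
    by (intro line_deriv_t[where F = "\<lambda>y. DZ y u"] d2) auto
  obtain \<eta> where eta: "0 < \<eta>" "\<eta> < h"
    and k1: "k h - k 0 = (h - 0) * (D2 (p + \<xi> *\<^sub>R u + \<eta> *\<^sub>R w) w \<bullet> c)"
    using MVT2[OF h kd] by blast
  have "(Z (p + h *\<^sub>R u + h *\<^sub>R w) - Z (p + h *\<^sub>R u) - Z (p + h *\<^sub>R w) + Z p) \<bullet> c = g h - g 0"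
    by (simp add: g_def inner_diff_left inner_add_left)
  also have "\<dots> = h * (k h - k 0)" using g1 by (simp add: k_def)
  also have "\<dots> = h * (h * (D2 (p + \<xi> *\<^sub>R u + \<eta> *\<^sub>R w) w \<bullet> c))" using k1 by simp
  finally show ?thesis using xi eta by force
qed

lemma clairaut:
  fixes Z :: "'a::euclidean_space \<Rightarrow> 'b::euclidean_space"
  assumes U: "open U" "p \<in> U"
    and dZ: "\<And>q. q \<in> U \<Longrightarrow> (Z has_derivative DZ q) (at q)"
    and du: "\<And>q. q \<in> U \<Longrightarrow> ((\<lambda>y. DZ y u) has_derivative D2u q) (at q)"
    and dw: "\<And>q. q \<in> U \<Longrightarrow> ((\<lambda>y. DZ y w) has_derivative D2w q) (at q)"
    and cu: "continuous_on U (\<lambda>q. D2u q w)" and cw: "continuous_on U (\<lambda>q. D2w q u)"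
  shows "D2u p w = D2w p u"
proof (rule ccontr)
  assume ne: "D2u p w \<noteq> D2w p u"
  define c where "c = D2u p w - D2w p u"
  define A where "A = (\<lambda>q. D2u q w \<bullet> c)"
  define B where "B = (\<lambda>q. D2w q u \<bullet> c)"
  have pos: "A p - B p > 0" using ne by (simp add: A_def B_def c_def inner_diff_left[symmetric])
  define \<epsilon> where "\<epsilon> = (A p - B p) / 2"
  have eps: "\<epsilon> > 0" using pos by (simp add: \<epsilon>_def)
  have cA: "continuous (at p) A" unfolding A_def
    using cu U by (intro continuous_intros) (simp add: continuous_on_eq_continuous_at)
  have cB: "continuous (at p) B" unfolding B_def
    using cw U by (intro continuous_intros) (simp add: continuous_on_eq_continuous_at)
  obtain d1 where d1: "d1 > 0" "\<And>q. dist q p < d1 \<Longrightarrow> dist (A q) (A p) < \<epsilon>"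
    using cA eps unfolding continuous_at_eps_delta by blast
  obtain d2 where d2: "d2 > 0" "\<And>q. dist q p < d2 \<Longrightarrow> dist (B q) (B p) < \<epsilon>"
    using cB eps unfolding continuous_at_eps_delta by blast
  obtain r where r: "r > 0" "ball p r \<subseteq> U" using U open_contains_ball by blast
  define R where "R = min r (min d1 d2)"
  have R: "R > 0" using r d1 d2 by (simp add: R_def)
  have nn: "norm u + norm w + 1 > 0" using norm_ge_zero[of u] norm_ge_zero[of w] by linarith
  define h where "h = R / (2 * (norm u + norm w + 1))"
  have h: "h > 0" unfolding h_def using R
    by (intro divide_pos_pos) (auto intro!: add_nonneg_pos)
  have close: "dist (p + s *\<^sub>R u + t *\<^sub>R w) p < R" if "s \<in> {0..h}" "t \<in> {0..h}" for s t
  proof -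
    have "dist (p + s *\<^sub>R u + t *\<^sub>R w) p = norm (s *\<^sub>R u + t *\<^sub>R w)" by (simp add: dist_norm)
    also have "\<dots> \<le> norm (s *\<^sub>R u) + norm (t *\<^sub>R w)" by (rule norm_triangle_ineq)
    also have "\<dots> = s * norm u + t * norm w" using that by simp
    also have "\<dots> \<le> h * norm u + h * norm w" using that by (intro add_mono mult_right_mono) auto
    also have "\<dots> < R"
    proof -
      have "h * (norm u + norm w) < h * (2 * (norm u + norm w + 1))"
        using h by (intro mult_strict_left_mono) (auto simp: add_nonneg_pos)
      also have "\<dots> = R" using R nn by (simp add: h_def)
      finally show ?thesis by (simp add: algebra_simps)
    qed
    finally show ?thesis .
  qed
  have inU: "p + s *\<^sub>R u + t *\<^sub>R w \<in> U" if "s \<in> {0..h}" "t \<in> {0..h}" for s t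
    using close[OF that] r R_def by (auto simp: dist_commute intro!: subsetD[OF r(2)])
  have inU': "p + s *\<^sub>R w + t *\<^sub>R u \<in> U" if "s \<in> {0..h}" "t \<in> {0..h}" for s t
    using inU[OF that(2) that(1)] by (simp add: algebra_simps)
  obtain s1 t1 where st1: "s1 \<in> {0..h}" "t1 \<in> {0..h}"
    and e1: "(Z (p + h *\<^sub>R u + h *\<^sub>R w) - Z (p + h *\<^sub>R u) - Z (p + h *\<^sub>R w) + Z p) \<bullet> c
      = h * (h * (D2u (p + s1 *\<^sub>R u + t1 *\<^sub>R w) w \<bullet> c))"
    using square_mvt[OF h, of Z DZ p u w D2u c] dZ du inU by blast
  obtain s2 t2 where st2: "s2 \<in> {0..h}" "t2 \<in> {0..h}"
    and e2: "(Z (p + h *\<^sub>R w + h *\<^sub>R u) - Z (p + h *\<^sub>R w) - Z (p + h *\<^sub>R u) + Z p) \<bullet> c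
      = h * (h * (D2w (p + s2 *\<^sub>R w + t2 *\<^sub>R u) u \<bullet> c))"
    using square_mvt[OF h, of Z DZ p w u D2w c] dZ dw inU' by blast
  have "(Z (p + h *\<^sub>R w + h *\<^sub>R u) - Z (p + h *\<^sub>R w) - Z (p + h *\<^sub>R u) + Z p) =
        (Z (p + h *\<^sub>R u + h *\<^sub>R w) - Z (p + h *\<^sub>R u) - Z (p + h *\<^sub>R w) + Z p)"
    by (simp add: algebra_simps)
  hence "h * (h * A (p + s1 *\<^sub>R u + t1 *\<^sub>R w)) = h * (h * B (p + t2 *\<^sub>R u + s2 *\<^sub>R w))"
    using e1 e2 by (simp add: A_def B_def algebra_simps)
  hence eqAB: "A (p + s1 *\<^sub>R u + t1 *\<^sub>R w) = B (p + t2 *\<^sub>R u + s2 *\<^sub>R w)" using h by simp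
  have "dist (A (p + s1 *\<^sub>R u + t1 *\<^sub>R w)) (A p) < \<epsilon>"
    using d1(2) close[OF st1] by (simp add: R_def)
  moreover have "dist (B (p + t2 *\<^sub>R u + s2 *\<^sub>R w)) (B p) < \<epsilon>"
    using d2(2) close[OF st2(2) st2(1)] by (simp add: R_def)
  ultimately have "\<bar>A p - B p\<bar> < 2 * \<epsilon>" using eqAB by (simp add: dist_real_def)
  thus False using pos by (simp add: \<epsilon>_def)
qed


lemma lin_expand:
  fixes L :: "'a::euclidean_space \<Rightarrow> 'b::real_vector"
  assumes "linear L" shows "L y = (\<Sum>b\<in>Basis. (y \<bullet> b) *\<^sub>R L b)"
proof -
  have "L y = L (\<Sum>b\<in>Basis. (y \<bullet> b) *\<^sub>R b)" by (simp add: euclidean_representation)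
  also have "\<dots> = (\<Sum>b\<in>Basis. (y \<bullet> b) *\<^sub>R L b)"
    by (simp add: linear_sum[OF assms] linear_scale[OF assms])
  finally show ?thesis .
qed

definition S2 :: "('a::euclidean_space \<Rightarrow> 'b::euclidean_space) \<Rightarrow> 'a \<Rightarrow> 'a \<Rightarrow> 'a \<Rightarrow> 'b" where
  "S2 Z p h y = (\<Sum>b\<in>Basis. (y \<bullet> b) *\<^sub>R Dv (\<lambda>q. Dv Z q b) p h)"

lemma w_deriv:
  fixes Z :: "'a::euclidean_space \<Rightarrow> 'b::euclidean_space" and Y :: "'a \<Rightarrow> 'a"
  assumes Z: "smooth_on U Z" and Y: "smooth_on U' Y" and p: "p \<in> U" "p \<in> U'"
  shows "((\<lambda>q. Dv Z q (Y q)) has_derivative (\<lambda>h. Dv Z p (Dv Y p h) + S2 Z p h (Y p))) (at p)"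
proof -
  have oU: "open (U \<inter> U')" using Z Y by (simp add: smooth_open open_Int)
  have linZ: "linear (Dv Z q)" if "q \<in> U" for q
    using has_derivative_linear[OF smooth_props(1)[OF Z that]] .
  have eq: "(\<Sum>b\<in>Basis. (Y q \<bullet> b) *\<^sub>R Dv Z q b) = Dv Z q (Y q)" if "q \<in> U \<inter> U'" for q
    using lin_expand[OF linZ, of q "Y q"] that by (simp only: IntD1)
  have db: "((\<lambda>q. (Y q \<bullet> b) *\<^sub>R Dv Z q b) has_derivative
      (\<lambda>h. (Y p \<bullet> b) *\<^sub>R Dv (\<lambda>q. Dv Z q b) p h + (Dv Y p h \<bullet> b) *\<^sub>R Dv Z p b)) (at p)" for b
    using has_derivative_scaleR[OF has_derivative_inner_left[OF smooth_props(1)[OF Y p(2)]] smooth_props(2)[OF Z p(1)]] .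
  have d: "((\<lambda>q. \<Sum>b\<in>Basis. (Y q \<bullet> b) *\<^sub>R Dv Z q b) has_derivative
      (\<lambda>h. \<Sum>b\<in>Basis. (Y p \<bullet> b) *\<^sub>R Dv (\<lambda>q. Dv Z q b) p h + (Dv Y p h \<bullet> b) *\<^sub>R Dv Z p b)) (at p)"
    using has_derivative_sum[of Basis "\<lambda>b q. (Y q \<bullet> b) *\<^sub>R Dv Z q b", OF db] .
  have "(\<lambda>h. \<Sum>b\<in>Basis. (Y p \<bullet> b) *\<^sub>R Dv (\<lambda>q. Dv Z q b) p h + (Dv Y p h \<bullet> b) *\<^sub>R Dv Z p b)
      = (\<lambda>h. Dv Z p (Dv Y p h) + S2 Z p h (Y p))"
  proof (rule ext)
    fix h
    have "Dv Z p (Dv Y p h) = (\<Sum>b\<in>Basis. (Dv Y p h \<bullet> b) *\<^sub>R Dv Z p b)"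
      by (rule lin_expand[OF linZ[OF p(1)]])
    thus "(\<Sum>b\<in>Basis. (Y p \<bullet> b) *\<^sub>R Dv (\<lambda>q. Dv Z q b) p h + (Dv Y p h \<bullet> b) *\<^sub>R Dv Z p b)
      = Dv Z p (Dv Y p h) + S2 Z p h (Y p)"
      by (simp only: S2_def sum.distrib add.commute)
  qed
  with d have "((\<lambda>q. \<Sum>b\<in>Basis. (Y q \<bullet> b) *\<^sub>R Dv Z q b) has_derivative (\<lambda>h. Dv Z p (Dv Y p h) + S2 Z p h (Y p))) (at p)"
    by simp
  thus ?thesis by (rule has_derivative_transform_within_open[OF _ oU]) (use p eq in auto)
qed

lemma S2_sym:
  fixes Z :: "'a::euclidean_space \<Rightarrow> 'b::euclidean_space"
  assumes Z: "smooth_on U Z" and p: "p \<in> U"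
  shows "S2 Z p h y = S2 Z p y h"
proof -
  have oU: "open U" using Z by (simp add: smooth_open)
  define H where "H = (\<lambda>b. Dv (\<lambda>q. Dv Z q b) p)"
  have linH: "linear (H b)" for b
    unfolding H_def using has_derivative_linear[OF smooth_props(2)[OF Z p]] .
  have sym: "H u w = H w u" for u w
    unfolding H_def
    by (rule clairaut[OF oU p, of Z "Dv Z"])
       (use smooth_props[OF Z] smooth_cont[OF Z] in auto)
  have ex: "S2 Z p h y = (\<Sum>b\<in>Basis. \<Sum>b'\<in>Basis. ((y \<bullet> b) * (h \<bullet> b')) *\<^sub>R H b b')" for h y
  proof -
    have "S2 Z p h y = (\<Sum>b\<in>Basis. (y \<bullet> b) *\<^sub>R H b h)" unfolding S2_def H_def ..
    also have "\<dots> = (\<Sum>b\<in>Basis. (y \<bullet> b) *\<^sub>R (\<Sum>b'\<in>Basis. (h \<bullet> b') *\<^sub>R H b b'))"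
      by (rule sum.cong[OF refl]) (simp only: lin_expand[OF linH, of _ h, symmetric])
    also have "\<dots> = (\<Sum>b\<in>Basis. \<Sum>b'\<in>Basis. ((y \<bullet> b) * (h \<bullet> b')) *\<^sub>R H b b')"
      by (simp only: scaleR_sum_right scaleR_scaleR)
    finally show ?thesis .
  qed
  have "S2 Z p h y = (\<Sum>b'\<in>Basis. \<Sum>b\<in>Basis. ((y \<bullet> b) * (h \<bullet> b')) *\<^sub>R H b b')"
    unfolding ex by (rule sum.swap)
  also have "\<dots> = (\<Sum>b'\<in>Basis. \<Sum>b\<in>Basis. ((h \<bullet> b') * (y \<bullet> b)) *\<^sub>R H b' b)"
    by (simp only: sym mult.commute)
  also have "\<dots> = S2 Z p y h" unfolding ex ..
  finally show ?thesis .
qed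


context sph begin

lemma NP_alt: "NP q w = ((a / DD) * gN w (q - z0) + (b / DD) * gN w (Jop (q - z0))) *\<^sub>R (q - z0)
   + ((b / DD) * gN w (q - z0) - (a / DD) * gN w (Jop (q - z0))) *\<^sub>R Jop (q - z0)"
  by (simp add: NP_def add_divide_distrib diff_divide_distrib)

lemma NPw_deriv:
  assumes dw: "(w has_derivative Dw) (at p)"
  shows "((\<lambda>q. NP q (w q)) has_derivative
    (\<lambda>h. (((a / DD) * gN (w p) (p - z0) + (b / DD) * gN (w p) (Jop (p - z0))) *\<^sub>R h
          + ((a / DD) * (gN (w p) h + gN (Dw h) (p - z0)) + (b / DD) * (gN (w p) (Jop h) + gN (Dw h) (Jop (p - z0)))) *\<^sub>R (p - z0))
        + (((b / DD) * gN (w p) (p - z0) - (a / DD) * gN (w p) (Jop (p - z0))) *\<^sub>R Jop h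
          + ((b / DD) * (gN (w p) h + gN (Dw h) (p - z0)) - (a / DD) * (gN (w p) (Jop h) + gN (Dw h) (Jop (p - z0)))) *\<^sub>R Jop (p - z0)))) (at p)"
proof -
  have fW: "((\<lambda>q. q - z0) has_derivative (\<lambda>h. h)) (at p)"
    by (auto intro!: derivative_eq_intros)
  have fJ: "((\<lambda>q. Jop (q - z0)) has_derivative (\<lambda>h. Jop h)) (at p)"
    using bounded_linear.has_derivative[OF bounded_linear_Jop fW] by simp
  have gW: "((\<lambda>q. gN (w q) (q - z0)) has_derivative (\<lambda>h. gN (w p) h + gN (Dw h) (p - z0))) (at p)"
    using bounded_bilinear.FDERIV[OF bounded_bilinear_gN dw fW] .
  have gJ: "((\<lambda>q. gN (w q) (Jop (q - z0))) has_derivative (\<lambda>h. gN (w p) (Jop h) + gN (Dw h) (Jop (p - z0)))) (at p)"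
    using bounded_bilinear.FDERIV[OF bounded_bilinear_gN dw fJ] .
  have c1: "((\<lambda>q. (a / DD) * gN (w q) (q - z0) + (b / DD) * gN (w q) (Jop (q - z0))) has_derivative
      (\<lambda>h. (a / DD) * (gN (w p) h + gN (Dw h) (p - z0)) + (b / DD) * (gN (w p) (Jop h) + gN (Dw h) (Jop (p - z0))))) (at p)"
    using has_derivative_add[OF has_derivative_mult_right[OF gW] has_derivative_mult_right[OF gJ]] .
  have c2: "((\<lambda>q. (b / DD) * gN (w q) (q - z0) - (a / DD) * gN (w q) (Jop (q - z0))) has_derivative
      (\<lambda>h. (b / DD) * (gN (w p) h + gN (Dw h) (p - z0)) - (a / DD) * (gN (w p) (Jop h) + gN (Dw h) (Jop (p - z0))))) (at p)"
    using has_derivative_diff[OF has_derivative_mult_right[OF gW] has_derivative_mult_right[OF gJ]] .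
  show ?thesis
    unfolding NP_alt
    using has_derivative_add[OF has_derivative_scaleR[OF c1 fW] has_derivative_scaleR[OF c2 fJ]] .
qed

lemma PP_add: "PP q (u + v) = PP q u + PP q v"
  by (simp add: PP_def NP_add)
lemma PP_diff: "PP q (u - v) = PP q u - PP q v"
  using linear_diff[OF linear_NP] by (simp add: PP_def)
lemma PP_scaleR: "PP q (c *\<^sub>R u) = c *\<^sub>R PP q u"
  by (simp add: PP_def NP_scaleR scaleR_diff_right)

lemma PP_W: assumes "q \<in> M" shows "PP q (q - z0) = 0"
proof -
  have 1: "gN (q - z0) (q - z0) = a" "gN (q - z0) (Jop (q - z0)) = b"
    using assms M_iff gN_J_swap[of "q - z0" "q - z0"] by auto
  have "NP q (q - z0) = ((a * a + b * b) / DD) *\<^sub>R (q - z0) + ((b * a - a * b) / DD) *\<^sub>R Jop (q - z0)"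
    unfolding NP_def 1 ..
  also have "\<dots> = q - z0" using DD_nz by (auto simp: DD_def power2_eq_square)
  finally show ?thesis by (simp add: PP_def)
qed

lemma PP_JW: assumes "q \<in> M" shows "PP q (Jop (q - z0)) = 0"
proof -
  have 1: "gN (Jop (q - z0)) (q - z0) = b" "gN (Jop (q - z0)) (Jop (q - z0)) = - a"
    using assms M_iff by auto
  have "NP q (Jop (q - z0)) = ((a * b + b * (- a)) / DD) *\<^sub>R (q - z0) + ((b * b - a * (- a)) / DD) *\<^sub>R Jop (q - z0)"
    unfolding NP_def 1 ..
  also have "\<dots> = Jop (q - z0)" using DD_nz by (auto simp: DD_def power2_eq_square add.commute)
  finally show ?thesis by (simp add: PP_def)
qed


definition "Cf u v z = (- ((a / DD) * gN z v + (b / DD) * gN z (Jop v))) *\<^sub>R u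
   + (- ((b / DD) * gN z v - (a / DD) * gN z (Jop v))) *\<^sub>R Jop u"

lemma nabla_on_M:
  assumes Y: "tangent_field M Y" and Z: "tangent_field M Z" and q: "q \<in> M"
  shows "nabla M Y Z q = PP q (Dv Z q (Y q))"
  unfolding nabla_def flatD_def tan_proj_eq[OF q] using dD_at[OF tf_deriv[OF Z q] q tf_T[OF Y q]] by simp

lemma nabla_nabla:
  assumes X: "tangent_field M X" and Y: "tangent_field M Y" and Z: "tangent_field M Z" and p: "p \<in> M"
  shows "nabla M X (nabla M Y Z) p = PP p (Dv Z p (Dv Y p (X p)) + S2 Z p (X p) (Y p)) - Cf (X p) (Y p) (Z p)"
proof -
  obtain UY where UY: "M \<subseteq> UY" "smooth_on UY Y" using tf_U[OF Y] by blast
  obtain UZ where UZ: "M \<subseteq> UZ" "smooth_on UZ Z" using tf_U[OF Z] by blast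
  define w where "w = (\<lambda>q. Dv Z q (Y q))"
  define Dw where "Dw = (\<lambda>h. Dv Z p (Dv Y p h) + S2 Z p h (Y p))"
  have dw: "(w has_derivative Dw) (at p)"
    unfolding w_def Dw_def using w_deriv[OF UZ(2) UY(2)] UY(1) UZ(1) p by blast
  define W where "W = p - z0"
  define c1 where "c1 = (a / DD) * gN (w p) W + (b / DD) * gN (w p) (Jop W)"
  define c2 where "c2 = (b / DD) * gN (w p) W - (a / DD) * gN (w p) (Jop W)"
  define c1d where "c1d = (\<lambda>h. (a / DD) * (gN (w p) h + gN (Dw h) W) + (b / DD) * (gN (w p) (Jop h) + gN (Dw h) (Jop W)))"
  define c2d where "c2d = (\<lambda>h. (b / DD) * (gN (w p) h + gN (Dw h) W) - (a / DD) * (gN (w p) (Jop h) + gN (Dw h) (Jop W)))"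
  define DN where "DN = (\<lambda>h. (c1 *\<^sub>R h + c1d h *\<^sub>R W) + (c2 *\<^sub>R Jop h + c2d h *\<^sub>R Jop W))"
  have dN: "((\<lambda>q. NP q (w q)) has_derivative DN) (at p)"
    using NPw_deriv[OF dw] unfolding DN_def c1_def c2_def c1d_def c2d_def W_def .
  have dV: "((\<lambda>q. w q - NP q (w q)) has_derivative (\<lambda>h. Dw h - DN h)) (at p)"
    using has_derivative_diff[OF dw dN] .
  have dV': "(nabla M Y Z has_derivative (\<lambda>h. Dw h - DN h)) (at p within M)"
  proof (rule has_derivative_transform_within[OF has_derivative_at_withinI[OF dV] zero_less_one p])
    fix q assume "q \<in> M"
    thus "w q - NP q (w q) = nabla M Y Z q" using nabla_on_M[OF Y Z] by (simp add: w_def PP_def)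
  qed
  have x: "X p \<in> Tq p" using tf_T[OF X p] .
  have xt: "X p \<in> tangent_space M p" using x tangent_eq[OF p] by simp
  have "nabla M X (nabla M Y Z) p = PP p (Dw (X p) - DN (X p))"
    unfolding nabla_def[of M X "nabla M Y Z"] flatD_def tan_proj_eq[OF p] dD_eq[OF dV' xt] ..
  also have "\<dots> = PP p (Dw (X p)) - (c1 *\<^sub>R X p + c2 *\<^sub>R Jop (X p))"
    unfolding PP_diff DN_def using PP_W[OF p] PP_JW[OF p] PP_id[OF x] PP_id[OF Tq_J[OF x]]
    by (simp add: PP_add PP_scaleR W_def)
  also have "c1 *\<^sub>R X p + c2 *\<^sub>R Jop (X p) = Cf (X p) (Y p) (Z p)"
  proof -
    have k: "gN (w p) W = - gN (Z p) (Y p)" "gN (w p) (Jop W) = - gN (Z p) (Jop (Y p))"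
      using key_W[OF Z p tf_T[OF Y p]] by (simp_all add: w_def W_def)
    show ?thesis unfolding Cf_def c1_def c2_def k by (simp add: algebra_simps)
  qed
  finally show ?thesis by (simp add: Dw_def)
qed


lemma lie_eq:
  assumes X: "tangent_field M X" and Y: "tangent_field M Y" and p: "p \<in> M"
  shows "lie M X Y p = Dv Y p (X p) - Dv X p (Y p)" "lie M X Y p \<in> Tq p"
proof -
  show l: "lie M X Y p = Dv Y p (X p) - Dv X p (Y p)"
    unfolding lie_def flatD_def
    using dD_at[OF tf_deriv[OF Y p] p tf_T[OF X p]] dD_at[OF tf_deriv[OF X p] p tf_T[OF Y p]] by simp
  have k1: "gN (Dv Y p (X p)) (p - z0) = - gN (Y p) (X p)" "gN (Dv Y p (X p)) (Jop (p - z0)) = - gN (Y p) (Jop (X p))"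
    using key_W[OF Y p tf_T[OF X p]] by auto
  have k2: "gN (Dv X p (Y p)) (p - z0) = - gN (X p) (Y p)" "gN (Dv X p (Y p)) (Jop (p - z0)) = - gN (X p) (Jop (Y p))"
    using key_W[OF X p tf_T[OF Y p]] by auto
  have s: "gN (Y p) (Jop (X p)) = gN (X p) (Jop (Y p))"
    by (metis gN_J_swap gN_sym)
  have e1: "gN (lie M X Y p) (p - z0) = 0"
    unfolding l by (simp only: gN_diff_left k1 k2) (simp add: gN_sym[of "X p" "Y p"])
  have e2: "gN (lie M X Y p) (Jop (p - z0)) = 0"
    unfolding l by (simp only: gN_diff_left k1 k2 s diff_self)
  show "lie M X Y p \<in> Tq p" unfolding Tq_def
    using e1 e2 gN_sym[of "p - z0"] gN_sym[of "Jop (p - z0)"] by simp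
qed

lemma curvR_eq:
  assumes X: "tangent_field M X" and Y: "tangent_field M Y" and Z: "tangent_field M Z" and p: "p \<in> M"
  shows "curvR M X Y Z p = Cf (Y p) (X p) (Z p) - Cf (X p) (Y p) (Z p)"
proof -
  obtain UZ where UZ: "M \<subseteq> UZ" "smooth_on UZ Z" using tf_U[OF Z] by blast
  have sym: "S2 Z p (X p) (Y p) = S2 Z p (Y p) (X p)" using S2_sym[OF UZ(2)] UZ(1) p by blast
  have linZ: "linear (Dv Z p)" using has_derivative_linear[OF tf_deriv[OF Z p]] .
  have l3: "nabla M (lie M X Y) Z p = PP p (Dv Z p (Dv Y p (X p)) - Dv Z p (Dv X p (Y p)))"
    unfolding nabla_def[of M "lie M X Y"] flatD_def tan_proj_eq[OF p]
    using dD_at[OF tf_deriv[OF Z p] p lie_eq(2)[OF X Y p]] lie_eq(1)[OF X Y p] linear_diff[OF linZ] by simp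
  show ?thesis
    unfolding curvR_def nabla_nabla[OF X Y Z p] nabla_nabla[OF Y X Z p] l3 sym
    by (simp add: PP_add PP_diff algebra_simps)
qed

end


lemma two_indep:
  fixes x y :: "('n::finite) pt"
  assumes ind: "independent {x, y}" and xy: "x \<noteq> y" and e: "c1 *\<^sub>R x + c2 *\<^sub>R y = 0"
  shows "c1 = 0 \<and> c2 = 0"
proof -
  have xs: "x \<notin> span {y}" using ind xy by (simp add: independent_insert)
  have y0: "y \<noteq> 0" using ind dependent_zero by blast
  have c1: "c1 = 0"
  proof (rule ccontr)
    assume "c1 \<noteq> 0"
    note c1n = this
    have "c1 *\<^sub>R x = - (c2 *\<^sub>R y)" using e by (simp add: eq_neg_iff_add_eq_0)
    hence "(1 / c1) *\<^sub>R (c1 *\<^sub>R x) = (1 / c1) *\<^sub>R (- (c2 *\<^sub>R y))" by simp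
    hence "x = (- c2 / c1) *\<^sub>R y" using c1n by simp
    moreover have "(- c2 / c1) *\<^sub>R y \<in> span {y}" by (intro span_scale span_base) simp
    ultimately have "x \<in> span {y}" by simp
    thus False using xs by blast
  qed
  thus ?thesis using e y0 by simp
qed

lemma pi1_nz:
  fixes x y :: "('n::finite) pt"
  assumes sp: "span {x, y} = B" and dB: "dim B = 2" and nd: "nondeg B"
  shows "pi1 x y y x \<noteq> 0"
proof
  assume z: "pi1 x y y x = 0"
  have xy: "x \<noteq> y"
  proof
    assume "x = y"
    hence "B \<subseteq> span {x}" using sp by simp
    hence "dim B \<le> card {x}" by (rule dim_le_card) simp
    thus False using dB by simp
  qed
  have ind: "independent {x, y}"
  proof -
    have "card {x, y} = dim (span {x, y})" using xy dB sp by simp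
    thus ?thesis using card_eq_dim[of "{x, y}" "span {x, y}"] span_superset[of "{x, y}"] by simp
  qed
  obtain c1 c2 where c: "(c1, c2) \<noteq> (0, 0)"
    and g1: "c1 * gN x x + c2 * gN y x = 0" and g2: "c1 * gN x y + c2 * gN y y = 0"
  proof (cases "gN y y = 0 \<and> gN x y = 0")
    case True thus ?thesis using that[of 0 1] gN_sym[of x y] by simp
  next
    case False
    have "gN y y * gN x x - gN x y * gN y x = 0" using z by (simp add: pi1_def gN_sym[of x y] mult.commute)
    thus ?thesis using that[of "gN y y" "- gN x y"] False gN_sym[of x y] by (simp add: algebra_simps)
  qed
  define v where "v = c1 *\<^sub>R x + c2 *\<^sub>R y"
  have vB: "v \<in> B" unfolding v_def sp[symmetric]
    by (intro span_add span_scale span_base) auto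
  have sub: "subspace {u. gN v u = 0}" unfolding subspace_def by simp
  have "{x, y} \<subseteq> {u. gN v u = 0}" using g1 g2 gN_sym[of x y] by (simp add: v_def algebra_simps)
  hence "span {x, y} \<subseteq> {u. gN v u = 0}" by (rule span_minimal[OF _ sub])
  hence "\<forall>u\<in>B. gN v u = 0" using sp by blast
  hence "v = 0" using nd vB unfolding nondeg_def by blast
  hence "c1 = 0 \<and> c2 = 0" using two_indep[OF ind xy] by (simp add: v_def)
  thus False using c by simp
qed


context sph begin

lemma curv_vals:
  assumes p: "p \<in> M" and sub: "\<beta> \<subseteq> tangent_space M p" and dB: "dim \<beta> = 2" and nd: "nondeg \<beta>"
    and tr: "totally_real \<beta>" and x: "x \<in> \<beta>" and y: "y \<in> \<beta>" and sp: "span {x, y} = \<beta>"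
  shows "Ksec M p x y = a / (a\<^sup>2 + b\<^sup>2) \<and> Ktsec M p x y = - b / (a\<^sup>2 + b\<^sup>2)"
proof -
  have xT: "x \<in> Tq p" and yT: "y \<in> Tq p" using sub x y tangent_eq[OF p] by auto
  have pz: "pi1 x y y x \<noteq> 0" by (rule pi1_nz[OF sp dB nd])
  have t: "gN y (Jop x) = 0" "gN y (Jop y) = 0" "gN x (Jop x) = 0" "gN x (Jop y) = 0"
    using tr x y unfolding totally_real_def by blast+
  have t2: "gN (Jop y) x = 0" "gN (Jop x) x = 0" "gN (Jop x) y = 0" "gN (Jop y) y = 0"
    using t gN_J_swap[of y x] gN_J_swap[of x x] gN_J_swap[of x y] gN_J_swap[of y y] by auto
  have R: "Rp M p x y y = Cf y x y - Cf x y y"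
    unfolding Rp_def using curvR_eq[OF ext_field_props(1)[OF p xT] ext_field_props(1)[OF p yT] ext_field_props(1)[OF p yT] p]
    by (simp add: ext_field_props(2)[OF p xT] ext_field_props(2)[OF p yT])
  have r1: "R4 M p x y y x = (a / DD) * pi1 x y y x"
    unfolding R4_def R Cf_def pi1_def
    by (simp add: gN_diff_left t t2 gN_sym[of x y]) (simp add: algebra_simps power2_eq_square diff_divide_distrib add_divide_distrib)
  have r2: "Rt4 M p x y y x = (- b / DD) * pi1 x y y x"
    unfolding Rt4_def R4_def R Cf_def pi1_def
    by (simp add: gN_diff_left t t2 gN_sym[of x y]) (simp add: algebra_simps power2_eq_square diff_divide_distrib add_divide_distrib)
  show ?thesis using pz unfolding Ksec_def Ktsec_def r1 r2 by (simp add: DD_def)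
qed

lemma const_curv: "const_totally_real_curv M (a / (a\<^sup>2 + b\<^sup>2)) (- b / (a\<^sup>2 + b\<^sup>2))"
  unfolding const_totally_real_curv_def using curv_vals by blast

end



theorem theorem3p1:
  fixes n :: nat and z0 :: "(real^'n) \<times> (real^'n)" and a b :: real
  assumes "CARD('n) = n + 1" and "n \<ge> 2" and "(a, b) \<noteq> (0, 0)"
  shows "holomorphic_hypersurface (hsphere z0 a b) \<and>
         h_umbilical n (hsphere z0 a b) \<and>
         const_totally_real_curv (hsphere z0 a b) (a / (a\<^sup>2 + b\<^sup>2)) (- b / (a\<^sup>2 + b\<^sup>2)) \<and>
         (\<forall>p\<in>hsphere z0 a b.
            gN (meanH n (hsphere z0 a b) p) (meanH n (hsphere z0 a b) p) = a / (a\<^sup>2 + b\<^sup>2) \<and>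
            gT (meanH n (hsphere z0 a b) p) (meanH n (hsphere z0 a b) p) = - b / (a\<^sup>2 + b\<^sup>2))"
proof -
  interpret S: sph z0 a b by unfold_locales (rule assms(3))
  have M: "hsphere z0 a b = S.M" by (simp add: S.M_def)
  have n1: "n \<ge> 1" using assms(2) by simp
  show ?thesis unfolding M
    using S.holo_M S.h_umb[OF assms(1) n1] S.const_curv S.H_vals'[OF _ assms(1) n1] by blast
qed

end
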